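(* Fix $t_0<t_1$ and a family of domains $\Omega_\tau\subset\mathbb{R}^d$, $\tau\in(t_0,t_1)$. For each $\tau$ let $V(\Omega_\tau)$, $H(\Omega_\tau)$ be real Hilbert spaces of functions on $\Omega_\tau$ with duals $V^\star(\Omega_\tau)$, $H^\star(\Omega_\tau)$ (realized as function spaces on $\Omega_\tau$), duality pairings $\langle\cdot,\cdot\rangle_{\Omega_\tau}$ and $(\cdot,\cdot)_{\Omega_\tau}$. Let $A:V(\Omega_\tau)\to V^\star(\Omega_\tau)$ be linear with $\langle Au,u\rangle_{\Omega_\tau}\ge\underline{c}_A\|u\|^2_{V(\Omega_\tau)}$, $\|Au\|_{V^\star(\Omega_\tau)}\le\overline{c}_A\|u\|_{V(\Omega_\tau)}$, $\overline{c}_A\ge\underline{c}_A>0$, and $B:V(\Omega_\tau)\to H(\Omega_\tau)$ linear, surjective, with $\|Bu\|_{H(\Omega_\tau)}\le\overline{c}_B\|u\|_{V(\Omega_\tau)}$, all constants uniform in $\tau$. Let $f\in\bigcap_{\tau}V^\star(\Omega_\tau)$. Consider the equality-constrained cones $K(\Omega_\tau)=\{u\in V(\Omega_\tau): Bu=0\}$ and $K^\star(\Omega_\tau)=H^\star(\Omega_\tau)$, the objective $\mathcal{E}(u;\Omega_\tau)=\langle\frac12Au-f,u\rangle_{\Omega_\tau}$ and Lagrangian $\mathcal{L}(u,\lambda;\Omega_\tau)=\mathcal{E}(u;\Omega_\tau)-(\lambda,Bu)_{\Omega_\tau}$ on $V(\Omega_\tau)\times H^\star(\Omega_\tau)$.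 Let $u_\tau$ be the minimizer of $\mathcal{E}(\cdot;\Omega_\tau)$ over $K(\Omega_\tau)$ and $(u_\tau,\lambda_\tau)$ the saddle point of $\mathcal{L}(\cdot,\cdot;\Omega_\tau)$ on $V(\Omega_\tau)\times H^\star(\Omega_\tau)$. Fix $t\in(t_0,t_1)$ and let $\phi_s,\phi_s^{-1}\in C^1([t_0-t,t_1-t];W^{1,\infty}_{\rm loc}(\mathbb{R}^d;\mathbb{R}^d))$ be mutually inverse with $\Omega_{t+s}=\phi_s(\Omega_t)$. Assume, uniformly in $s\in(t_0-t,t_1-t)$ and $t\in(t_0,t_1)$: $v\mapsto v\circ\phi_s$ is a bijection $V(\Omega_{t+s})\to V(\Omega_t)$, $V^\star(\Omega_{t+s})\to V^\star(\Omega_t)$, $H(\Omega_{t+s})\to H(\Omega_t)$, $H^\star(\Omega_{t+s})\to H^\star(\Omega_t)$; $\langle Av,\chi\rangle_{\Omega_{t+s}}=\langle[A+sA^1+A^2_s](v\circ\phi_s),\chi\circ\phi_s\rangle_{\Omega_t}$ with bounded linear $A^1,A^2_s$ and $\|A^2_su\|_{V^\star(\Omega_t)}\le o(s)\|u\|_{V(\Omega_t)}$; $(\mu,Bv)_{\Omega_{t+s}}=(\mu\circ\phi_s,[B+sB^1+B^2_s](v\circ\phi_s))_{\Omega_t}$ with bounded linear $B^1,B^2_s:V(\Omega_t)\to H(\Omega_t)$, $B+sB^1+B^2_s$ surjective and $\|B^2_su\|_{H(\Omega_t)}\le o(s)\|u\|_{V(\Omega_t)}$; $\langle f,v\rangle_{\Omega_{t+s}}=\langle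 f+sf^1+f^2_s,v\circ\phi_s\rangle_{\Omega_t}$ with $f^1,f^2_s\in V^\star(\Omega_t)$, $\|f^2_s\|_{V^\star(\Omega_t)}=o(s)$ (here $o(s)$ denotes nonnegative functions that are $o(s)$ as $s\to0$). Then $\mu\mapsto\mu\circ\phi_s$ is a bijection $K^\star(\Omega_{t+s})\to K^\star(\Omega_t)$, and $$\lim_{s\to0}\frac{\mathcal{E}(u_{t+s};\Omega_{t+s})-\mathcal{E}(u_t;\Omega_t)}{s}=\langle\tfrac12A^1u_t-f^1,u_t\rangle_{\Omega_t}-(\lambda_t,B^1u_t)_{\Omega_t}.$$
   Context: $v\circ\phi_s$ denotes composition of a function on $\Omega_{t+s}$ with $\phi_s:\Omega_t\to\Omega_{t+s}$. *)

theory Defs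
  imports "HOL-Analysis.Analysis"
begin

text \<open>Function spaces on a domain are modelled as sets of real-valued functions on
  the ambient space (total functions, vanishing outside the domain), with pointwise
  linear operations.\<close>

definition fsubspace :: "('x \<Rightarrow> real) set \<Rightarrow> bool" where
  "fsubspace S \<longleftrightarrow> (\<lambda>x. 0) \<in> S \<and> (\<forall>u\<in>S. \<forall>v\<in>S. (\<lambda>x. u x + v x) \<in> S)
     \<and> (\<forall>c. \<forall>u\<in>S. (\<lambda>x. c * u x) \<in> S)"

definition supported_in :: "'x set \<Rightarrow> ('x \<Rightarrow> real) set \<Rightarrow> bool" where
  "supported_in \<Omega> S \<longleftrightarrow> (\<forall>u\<in>S. \<forall>x. x \<notin> \<Omega> \<longrightarrow> u x = 0)"

definition fnorm :: "(('x \<Rightarrow> real) \<Rightarrow> ('x \<Rightarrow> real) \<Rightarrow> real) \<Rightarrow> ('x \<Rightarrow> real) \<Rightarrow> real" where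
  "fnorm ip u = sqrt (ip u u)"

definition hilbert_fspace :: "('x \<Rightarrow> real) set \<Rightarrow> (('x \<Rightarrow> real) \<Rightarrow> ('x \<Rightarrow> real) \<Rightarrow> real) \<Rightarrow> bool" where
  "hilbert_fspace S ip \<longleftrightarrow> fsubspace S
     \<and> (\<forall>u\<in>S. \<forall>v\<in>S. ip u v = ip v u)
     \<and> (\<forall>u\<in>S. \<forall>v\<in>S. \<forall>w\<in>S. ip (\<lambda>x. u x + v x) w = ip u w + ip v w)
     \<and> (\<forall>c. \<forall>u\<in>S. \<forall>v\<in>S. ip (\<lambda>x. c * u x) v = c * ip u v)
     \<and> (\<forall>u\<in>S. u \<noteq> (\<lambda>x. 0) \<longrightarrow> ip u u > 0)
     \<and> (\<forall>X. (\<forall>n. X n \<in> S) \<and>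
            (\<forall>e>0. \<exists>N. \<forall>m\<ge>N. \<forall>n\<ge>N. fnorm ip (\<lambda>x. X m x - X n x) < e)
          \<longrightarrow> (\<exists>u\<in>S. (\<lambda>n. fnorm ip (\<lambda>x. X n x - u x)) \<longlonglongrightarrow> 0))"

definition bdd_lin_functional ::
  "('x \<Rightarrow> real) set \<Rightarrow> (('x \<Rightarrow> real) \<Rightarrow> ('x \<Rightarrow> real) \<Rightarrow> real) \<Rightarrow> (('x \<Rightarrow> real) \<Rightarrow> real) \<Rightarrow> bool" where
  "bdd_lin_functional S ip l \<longleftrightarrow>
     (\<forall>u\<in>S. \<forall>v\<in>S. l (\<lambda>x. u x + v x) = l u + l v)
   \<and> (\<forall>c. \<forall>u\<in>S. l (\<lambda>x. c * u x) = c * l u)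
   \<and> (\<exists>C. \<forall>u\<in>S. \<bar>l u\<bar> \<le> C * fnorm ip u)"

definition dual_fspace ::
  "('x \<Rightarrow> real) set \<Rightarrow> (('x \<Rightarrow> real) \<Rightarrow> ('x \<Rightarrow> real) \<Rightarrow> real) \<Rightarrow> ('x \<Rightarrow> real) set
   \<Rightarrow> (('x \<Rightarrow> real) \<Rightarrow> ('x \<Rightarrow> real) \<Rightarrow> real) \<Rightarrow> bool" where
  "dual_fspace S ip Ss p \<longleftrightarrow> fsubspace Ss
     \<and> (\<forall>g\<in>Ss. bdd_lin_functional S ip (p g))
     \<and> (\<forall>g\<in>Ss. \<forall>h\<in>Ss. \<forall>u\<in>S. p (\<lambda>x. g x + h x) u = p g u + p h u)
     \<and> (\<forall>c. \<forall>g\<in>Ss. \<forall>u\<in>S. p (\<lambda>x. c * g x) u = c * p g u)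
     \<and> (\<forall>l. bdd_lin_functional S ip l \<longrightarrow> (\<exists>!g. g \<in> Ss \<and> (\<forall>u\<in>S. p g u = l u)))"

definition dual_norm ::
  "('x \<Rightarrow> real) set \<Rightarrow> (('x \<Rightarrow> real) \<Rightarrow> ('x \<Rightarrow> real) \<Rightarrow> real) \<Rightarrow> (('x \<Rightarrow> real) \<Rightarrow> ('x \<Rightarrow> real) \<Rightarrow> real)
   \<Rightarrow> ('x \<Rightarrow> real) \<Rightarrow> real" where
  "dual_norm S ip p g = Sup ({0} \<union> {\<bar>p g u\<bar> | u. u \<in> S \<and> fnorm ip u \<le> 1})"

definition lin_map :: "('x \<Rightarrow> real) set \<Rightarrow> ('y \<Rightarrow> real) set \<Rightarrow> (('x \<Rightarrow> real) \<Rightarrow> ('y \<Rightarrow> real)) \<Rightarrow> bool" where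
  "lin_map S T F \<longleftrightarrow> (\<forall>u\<in>S. F u \<in> T)
     \<and> (\<forall>u\<in>S. \<forall>v\<in>S. F (\<lambda>x. u x + v x) = (\<lambda>y. F u y + F v y))
     \<and> (\<forall>c. \<forall>u\<in>S. F (\<lambda>x. c * u x) = (\<lambda>y. c * F u y))"

definition small_o :: "(real \<Rightarrow> real) \<Rightarrow> bool" where
  "small_o g \<longleftrightarrow> (\<forall>s. g s \<ge> 0) \<and> ((\<lambda>s. g s / s) \<longlongrightarrow> 0) (at 0)"

definition pullback_unif ::
  "real set \<Rightarrow> (real \<Rightarrow> 'x \<Rightarrow> 'x) \<Rightarrow> (real \<Rightarrow> ('x \<Rightarrow> real) set) \<Rightarrow> (real \<Rightarrow> ('x \<Rightarrow> real) \<Rightarrow> real)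
   \<Rightarrow> ('x \<Rightarrow> real) set \<Rightarrow> (('x \<Rightarrow> real) \<Rightarrow> real) \<Rightarrow> bool" where
  "pullback_unif I \<phi> S1 n1 S0 n0 \<longleftrightarrow>
     (\<forall>s\<in>I. bij_betw (\<lambda>v. v \<circ> \<phi> s) (S1 s) S0)
   \<and> (\<exists>C. \<forall>s\<in>I. \<forall>v\<in>S1 s. n0 (v \<circ> \<phi> s) \<le> C * n1 s v \<and> n1 s v \<le> C * n0 (v \<circ> \<phi> s))"

text \<open>W^{1,\<infinity>} on a set K: bounded and Lipschitz; W^{1,\<infinity>}_loc: on every compact set.
  The W^{1,\<infinity>}(K) norm is sup norm plus the Lipschitz constant.\<close>
definition W1inf_on :: "'a::euclidean_space set \<Rightarrow> ('a \<Rightarrow> 'a) \<Rightarrow> bool" where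
  "W1inf_on K g \<longleftrightarrow> bounded (g ` K) \<and> (\<exists>L. L-lipschitz_on K g)"

definition W1inf_loc :: "('a::euclidean_space \<Rightarrow> 'a) \<Rightarrow> bool" where
  "W1inf_loc g \<longleftrightarrow> (\<forall>K. compact K \<longrightarrow> W1inf_on K g)"

definition w1inf_norm :: "'a::euclidean_space set \<Rightarrow> ('a \<Rightarrow> 'a) \<Rightarrow> real" where
  "w1inf_norm K g = (SUP x\<in>K. norm (g x))
      + (SUP p\<in>{(x, y). x \<in> K \<and> y \<in> K \<and> x \<noteq> y}. dist (g (fst p)) (g (snd p)) / dist (fst p) (snd p))"

definition C1_W1inf_loc :: "real set \<Rightarrow> (real \<Rightarrow> 'a::euclidean_space \<Rightarrow> 'a) \<Rightarrow> bool" where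
  "C1_W1inf_loc I \<phi> \<longleftrightarrow> (\<exists>\<phi>'. \<forall>s\<in>I. W1inf_loc (\<phi> s) \<and> W1inf_loc (\<phi>' s) \<and>
     (\<forall>R>0.
        ((\<lambda>h. w1inf_norm (cball 0 R) (\<lambda>x. (\<phi> (s + h) x - \<phi> s x) /\<^sub>R h - \<phi>' s x)) \<longlongrightarrow> 0)
          (at 0 within {h. s + h \<in> I})
      \<and> ((\<lambda>r. w1inf_norm (cball 0 R) (\<lambda>x. \<phi>' r x - \<phi>' s x)) \<longlongrightarrow> 0) (at s within I)))"

definition energy ::
  "(('x \<Rightarrow> real) \<Rightarrow> ('x \<Rightarrow> real) \<Rightarrow> real) \<Rightarrow> (('x \<Rightarrow> real) \<Rightarrow> ('x \<Rightarrow> real)) \<Rightarrow> ('x \<Rightarrow> real)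
   \<Rightarrow> ('x \<Rightarrow> real) \<Rightarrow> real" where
  "energy p A f u = p (\<lambda>x. (1/2) * A u x - f x) u"

definition lagrangian ::
  "(('x \<Rightarrow> real) \<Rightarrow> ('x \<Rightarrow> real) \<Rightarrow> real) \<Rightarrow> (('x \<Rightarrow> real) \<Rightarrow> ('x \<Rightarrow> real) \<Rightarrow> real)
   \<Rightarrow> (('x \<Rightarrow> real) \<Rightarrow> ('x \<Rightarrow> real)) \<Rightarrow> (('x \<Rightarrow> real) \<Rightarrow> ('x \<Rightarrow> real)) \<Rightarrow> ('x \<Rightarrow> real)
   \<Rightarrow> ('x \<Rightarrow> real) \<Rightarrow> ('x \<Rightarrow> real) \<Rightarrow> real" where
  "lagrangian p q A B f u \<mu> = energy p A f u - q \<mu> (B u)"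

definition is_minimizer :: "'a set \<Rightarrow> ('a \<Rightarrow> real) \<Rightarrow> 'a \<Rightarrow> bool" where
  "is_minimizer K E u \<longleftrightarrow> u \<in> K \<and> (\<forall>w\<in>K. E u \<le> E w)"

definition is_saddle :: "'a set \<Rightarrow> 'b set \<Rightarrow> ('a \<Rightarrow> 'b \<Rightarrow> real) \<Rightarrow> 'a \<Rightarrow> 'b \<Rightarrow> bool" where
  "is_saddle X Y L u \<mu> \<longleftrightarrow> u \<in> X \<and> \<mu> \<in> Y \<and>
     (\<forall>w\<in>X. \<forall>\<nu>\<in>Y. L u \<nu> \<le> L u \<mu> \<and> L u \<mu> \<le> L w \<mu>)"

definition eq_cone :: "('x \<Rightarrow> real) set \<Rightarrow> (('x \<Rightarrow> real) \<Rightarrow> ('y \<Rightarrow> real)) \<Rightarrow> ('x \<Rightarrow> real) set" where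
  "eq_cone V B = {u \<in> V. B u = (\<lambda>x. 0)}"

definition eq_cone_dual :: "('y \<Rightarrow> real) set \<Rightarrow> ('y \<Rightarrow> real) set" where
  "eq_cone_dual Hs = Hs"

end

theory Submission
  imports Defs
begin

locale hsp =
  fixes S :: "('x \<Rightarrow> real) set" and ip :: "('x \<Rightarrow> real) \<Rightarrow> ('x \<Rightarrow> real) \<Rightarrow> real"
  assumes hf: "hilbert_fspace S ip"
begin

lemma zero[simp, intro]: "(\<lambda>x. 0) \<in> S"
  using hf by (simp add: hilbert_fspace_def fsubspace_def)
lemma add[simp, intro]: "u \<in> S \<Longrightarrow> v \<in> S \<Longrightarrow> (\<lambda>x. u x + v x) \<in> S"
  using hf by (simp add: hilbert_fspace_def fsubspace_def)
lemma scale[simp, intro]: "u \<in> S \<Longrightarrow> (\<lambda>x. c * u x) \<in> S"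
  using hf by (simp add: hilbert_fspace_def fsubspace_def)
lemma diff[simp, intro]: assumes "u \<in> S" "v \<in> S" shows "(\<lambda>x. u x - v x) \<in> S"
proof -
  have "(\<lambda>x. u x + (\<lambda>x. (-1) * v x) x) \<in> S" using assms add scale by blast
  then show ?thesis by simp
qed
lemma sym: "u \<in> S \<Longrightarrow> v \<in> S \<Longrightarrow> ip u v = ip v u"
  using hf by (simp add: hilbert_fspace_def)
lemma addL[simp]: "u \<in> S \<Longrightarrow> v \<in> S \<Longrightarrow> w \<in> S \<Longrightarrow> ip (\<lambda>x. u x + v x) w = ip u w + ip v w"
  using hf unfolding hilbert_fspace_def by blast
lemma scaleL[simp]: "u \<in> S \<Longrightarrow> v \<in> S \<Longrightarrow> ip (\<lambda>x. c * u x) v = c * ip u v"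
  using hf unfolding hilbert_fspace_def by blast
lemma addR[simp]: assumes u: "u \<in> S" and v: "v \<in> S" and w: "w \<in> S" shows "ip w (\<lambda>x. u x + v x) = ip w u + ip w v"
  by (metis addL[OF u v w] sym[OF w add[OF u v]] sym[OF w u] sym[OF w v])
lemma scaleR[simp]: assumes u: "u \<in> S" and v: "v \<in> S" shows "ip v (\<lambda>x. c * u x) = c * ip v u"
  by (metis scaleL[OF u v] sym[OF v scale[OF u]] sym[OF v u])
lemma pd: "u \<in> S \<Longrightarrow> u \<noteq> (\<lambda>x. 0) \<Longrightarrow> ip u u > 0"
  using hf by (simp add: hilbert_fspace_def)
lemma zeroL[simp]: assumes "w \<in> S" shows "ip (\<lambda>x. 0) w = 0"
proof -
  have "ip (\<lambda>x. 0 * w x) w = 0 * ip w w" using assms scaleL by blast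
  then show ?thesis by simp
qed
lemma zeroR[simp]: assumes "w \<in> S" shows "ip w (\<lambda>x. 0) = 0"
  using sym[OF assms zero] zeroL[OF assms] by simp
lemma pos: assumes "u \<in> S" shows "ip u u \<ge> 0"
proof (cases "u = (\<lambda>x. 0)")
  case True then show ?thesis by simp
next
  case False then show ?thesis using pd[OF assms] by (simp add: less_imp_le)
qed
lemma complete: "(\<forall>n. X n \<in> S) \<Longrightarrow> (\<forall>e>0. \<exists>N. \<forall>m\<ge>N. \<forall>n\<ge>N. fnorm ip (\<lambda>x. X m x - X n x) < e)
          \<Longrightarrow> (\<exists>u\<in>S. (\<lambda>n. fnorm ip (\<lambda>x. X n x - u x)) \<longlonglongrightarrow> 0)"
  using hf unfolding hilbert_fspace_def by blast

lemma quad: assumes u: "u \<in> S" and v: "v \<in> S"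
  shows "ip (\<lambda>x. u x + c * v x) (\<lambda>x. u x + c * v x) = ip u u + 2 * c * ip u v + c\<^sup>2 * ip v v"
proof -
  have cv: "(\<lambda>x. c * v x) \<in> S" using v by simp
  have "ip (\<lambda>x. u x + c * v x) (\<lambda>x. u x + c * v x)
      = ip u (\<lambda>x. u x + c * v x) + ip (\<lambda>x. c * v x) (\<lambda>x. u x + c * v x)"
    using addL[OF u cv, of "\<lambda>x. u x + c * v x"] u cv by simp
  also have "\<dots> = ip u u + c * ip u v + (c * ip v u + c * (c * ip v v))"
    using u v cv by (simp add: algebra_simps)
  also have "\<dots> = ip u u + 2 * c * ip u v + c\<^sup>2 * ip v v"
    using sym[OF u v] by (simp add: power2_eq_square algebra_simps)
  finally show ?thesis .
qed

lemma fn_nonneg[simp]: "u \<in> S \<Longrightarrow> fnorm ip u \<ge> 0"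
  by (drule pos) (simp add: fnorm_def)

lemma fn_sq: "u \<in> S \<Longrightarrow> (fnorm ip u)\<^sup>2 = ip u u"
  by (drule pos) (simp add: fnorm_def)

lemma CS: assumes u: "u \<in> S" and v: "v \<in> S"
  shows "\<bar>ip u v\<bar> \<le> fnorm ip u * fnorm ip v"
proof (cases "v = (\<lambda>x. 0)")
  case True
  then show ?thesis using u by simp
next
  case False
  define a where "a = ip u u"
  define b where "b = ip u v"
  define cc where "cc = ip v v"
  have cc: "cc > 0" using pd[OF v False] cc_def by simp
  have uv: "(\<lambda>x. u x + (- b / cc) * v x) \<in> S" using add[OF u scale[OF v]] by blast
  have "0 \<le> ip (\<lambda>x. u x + (- b / cc) * v x) (\<lambda>x. u x + (- b / cc) * v x)"
    by (rule pos[OF uv])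
  also have "\<dots> = a + 2 * (- b / cc) * b + (- b / cc)\<^sup>2 * cc"
    unfolding a_def b_def cc_def by (rule quad[OF u v])
  also have "\<dots> = a - b\<^sup>2 / cc" using cc by (simp add: field_simps power2_eq_square)
  finally have "b\<^sup>2 \<le> a * cc" using cc by (simp add: field_simps)
  then have "sqrt (b\<^sup>2) \<le> sqrt (a * cc)" by (rule real_sqrt_le_mono)
  then have "\<bar>b\<bar> \<le> sqrt a * sqrt cc" by (simp add: real_sqrt_mult)
  then show ?thesis by (simp add: fnorm_def a_def b_def cc_def real_sqrt_mult)
qed

lemma fn_scale: assumes u: "u \<in> S"
  shows "fnorm ip (\<lambda>x. c * u x) = \<bar>c\<bar> * fnorm ip u"
proof -
  have "ip (\<lambda>x. c * u x) (\<lambda>x. c * u x) = c\<^sup>2 * ip u u"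
    using u by (simp add: power2_eq_square)
  then show ?thesis by (simp add: fnorm_def real_sqrt_mult)
qed

lemma fn_triangle: assumes u: "u \<in> S" and v: "v \<in> S"
  shows "fnorm ip (\<lambda>x. u x + v x) \<le> fnorm ip u + fnorm ip v"
proof -
  have "ip (\<lambda>x. u x + v x) (\<lambda>x. u x + v x) = ip u u + 2 * ip u v + ip v v"
    using quad[OF u v, of 1] by simp
  also have "\<dots> \<le> (fnorm ip u)\<^sup>2 + 2 * (fnorm ip u * fnorm ip v) + (fnorm ip v)\<^sup>2"
    using CS[OF u v] fn_sq[OF u] fn_sq[OF v] by simp
  also have "\<dots> = (fnorm ip u + fnorm ip v)\<^sup>2" by (simp add: power2_eq_square algebra_simps)
  finally have "sqrt (ip (\<lambda>x. u x + v x) (\<lambda>x. u x + v x)) \<le> sqrt ((fnorm ip u + fnorm ip v)\<^sup>2)"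
    by (rule real_sqrt_le_mono)
  then show ?thesis using fn_nonneg[OF u] fn_nonneg[OF v] by (simp add: fnorm_def)
qed

lemma fn_zero[simp]: "fnorm ip (\<lambda>x. 0) = 0"
  by (simp add: fnorm_def)

lemma fn_eq0: assumes "u \<in> S" "fnorm ip u = 0" shows "u = (\<lambda>x. 0)"
proof (rule ccontr)
  assume "u \<noteq> (\<lambda>x. 0)"
  then have "ip u u > 0" by (rule pd[OF assms(1)])
  then show False using assms(2) by (simp add: fnorm_def)
qed

lemma fn_diff_commute: assumes u: "u \<in> S" and v: "v \<in> S"
  shows "fnorm ip (\<lambda>x. u x - v x) = fnorm ip (\<lambda>x. v x - u x)"
proof -
  have "fnorm ip (\<lambda>x. (-1) * (\<lambda>x. u x - v x) x) = \<bar>-1\<bar> * fnorm ip (\<lambda>x. u x - v x)"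
    using fn_scale[OF diff[OF u v]] by blast
  then show ?thesis by simp
qed

lemma fn_diff_triangle: assumes u: "u \<in> S" and v: "v \<in> S" and w: "w \<in> S"
  shows "fnorm ip (\<lambda>x. u x - w x) \<le> fnorm ip (\<lambda>x. u x - v x) + fnorm ip (\<lambda>x. v x - w x)"
  using fn_triangle[OF diff[OF u v] diff[OF v w]] by simp

lemma fn_diff_le: assumes u: "u \<in> S" and v: "v \<in> S"
  shows "fnorm ip (\<lambda>x. u x - v x) \<le> fnorm ip u + fnorm ip v"
proof -
  have "fnorm ip (\<lambda>x. u x + (\<lambda>x. (-1) * v x) x) \<le> fnorm ip u + fnorm ip (\<lambda>x. (-1) * v x)"
    using fn_triangle[OF u scale[OF v]] by blast
  then show ?thesis using fn_scale[OF v, of "-1"] by simp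
qed

lemma fn_ge_diff: assumes u: "u \<in> S" and v: "v \<in> S"
  shows "fnorm ip u \<le> fnorm ip (\<lambda>x. u x - v x) + fnorm ip v"
  using fn_triangle[OF diff[OF u v] v] by simp

end

locale dsp = hsp +
  fixes Ss :: "('x \<Rightarrow> real) set" and p :: "('x \<Rightarrow> real) \<Rightarrow> ('x \<Rightarrow> real) \<Rightarrow> real"
  assumes df: "dual_fspace S ip Ss p"
begin

lemma dzero[simp, intro]: "(\<lambda>x. 0) \<in> Ss" using df by (simp add: dual_fspace_def fsubspace_def)
lemma dadd[simp, intro]: "g \<in> Ss \<Longrightarrow> h \<in> Ss \<Longrightarrow> (\<lambda>x. g x + h x) \<in> Ss"
  using df by (simp add: dual_fspace_def fsubspace_def)
lemma dscale[simp, intro]: "g \<in> Ss \<Longrightarrow> (\<lambda>x. c * g x) \<in> Ss"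
  using df by (simp add: dual_fspace_def fsubspace_def)
lemma ddiff[simp, intro]: assumes "u \<in> Ss" "v \<in> Ss" shows "(\<lambda>x. u x - v x) \<in> Ss"
proof -
  have "(\<lambda>x. u x + (\<lambda>x. (-1) * v x) x) \<in> Ss" using assms dadd dscale by blast
  then show ?thesis by simp
qed
lemma gaddL[simp]: "g \<in> Ss \<Longrightarrow> h \<in> Ss \<Longrightarrow> u \<in> S \<Longrightarrow> p (\<lambda>x. g x + h x) u = p g u + p h u"
  using df by (simp add: dual_fspace_def)
lemma gscaleL[simp]: "g \<in> Ss \<Longrightarrow> u \<in> S \<Longrightarrow> p (\<lambda>x. c * g x) u = c * p g u"
  using df by (simp add: dual_fspace_def)
lemma gzeroL[simp]: assumes "u \<in> S" shows "p (\<lambda>x. 0) u = 0"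
proof -
  have "p (\<lambda>x. 0 * (\<lambda>x. 0) x) u = 0 * p (\<lambda>x. 0) u" using assms gscaleL dzero by blast
  then show ?thesis by simp
qed
lemma gdiffL[simp]: assumes g: "g \<in> Ss" and h: "h \<in> Ss" and u: "u \<in> S"
  shows "p (\<lambda>x. g x - h x) u = p g u - p h u"
proof -
  have "p (\<lambda>x. g x + (\<lambda>x. (-1) * h x) x) u = p g u + p (\<lambda>x. (-1) * h x) u"
    using gaddL[OF g dscale[OF h] u] .
  then show ?thesis using gscaleL[OF h u, of "-1"] by simp
qed
lemma bl: "g \<in> Ss \<Longrightarrow> bdd_lin_functional S ip (p g)"
  using df by (simp add: dual_fspace_def)
lemma paddR[simp]: "g \<in> Ss \<Longrightarrow> u \<in> S \<Longrightarrow> v \<in> S \<Longrightarrow> p g (\<lambda>x. u x + v x) = p g u + p g v"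
  using df by (simp add: dual_fspace_def bdd_lin_functional_def)
lemma pscaleR[simp]: "g \<in> Ss \<Longrightarrow> u \<in> S \<Longrightarrow> p g (\<lambda>x. c * u x) = c * p g u"
  using df by (simp add: dual_fspace_def bdd_lin_functional_def)
lemma pzeroR[simp]: assumes "g \<in> Ss" shows "p g (\<lambda>x. 0) = 0"
proof -
  have "p g (\<lambda>x. 0 * (\<lambda>x. 0) x) = 0 * p g (\<lambda>x. 0)" using assms pscaleR zero by blast
  then show ?thesis by simp
qed
lemma pdiffR[simp]: assumes g: "g \<in> Ss" and u: "u \<in> S" and v: "v \<in> S"
  shows "p g (\<lambda>x. u x - v x) = p g u - p g v"
proof -
  have "p g (\<lambda>x. u x + (\<lambda>x. (-1) * v x) x) = p g u + p g (\<lambda>x. (-1) * v x)"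
    using paddR[OF g u scale[OF v]] .
  then show ?thesis using pscaleR[OF g v, of "-1"] by simp
qed

lemma dn_bdd: assumes g: "g \<in> Ss"
  shows "bdd_above ({0} \<union> {\<bar>p g v\<bar> | v. v \<in> S \<and> fnorm ip v \<le> 1})"
proof -
  have "\<exists>C. \<forall>v\<in>S. \<bar>p g v\<bar> \<le> C * fnorm ip v"
    using bl[OF g] by (simp add: bdd_lin_functional_def)
  then obtain C where C: "\<And>v. v \<in> S \<Longrightarrow> \<bar>p g v\<bar> \<le> C * fnorm ip v" by blast
  let ?X = "{0} \<union> {\<bar>p g v\<bar> | v. v \<in> S \<and> fnorm ip v \<le> 1}"
  show "bdd_above ?X"
  proof (rule bdd_aboveI[where M = "\<bar>C\<bar>"])
    fix x assume "x \<in> ?X"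
    then show "x \<le> \<bar>C\<bar>"
    proof
      assume "x \<in> {0}" then show ?thesis by simp
    next
      assume "x \<in> {\<bar>p g v\<bar> | v. v \<in> S \<and> fnorm ip v \<le> 1}"
      then obtain v where v: "v \<in> S" "fnorm ip v \<le> 1" "x = \<bar>p g v\<bar>" by blast
      have "x \<le> C * fnorm ip v" using C v by simp
      also have "\<dots> \<le> \<bar>C\<bar> * fnorm ip v" using fn_nonneg[OF v(1)] by (simp add: mult_right_mono)
      also have "\<dots> \<le> \<bar>C\<bar>" using v(2) fn_nonneg[OF v(1)] by (simp add: mult_left_le)
      finally show ?thesis .
    qed
  qed
qed

lemma dn_nonneg[simp]: assumes g: "g \<in> Ss" shows "dual_norm S ip p g \<ge> 0"
  unfolding dual_norm_def by (rule cSup_upper[OF _ dn_bdd[OF g]]) simp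

lemma dn_bound: assumes g: "g \<in> Ss" and u: "u \<in> S"
  shows "\<bar>p g u\<bar> \<le> dual_norm S ip p g * fnorm ip u"
proof -
  let ?X = "{0} \<union> {\<bar>p g v\<bar> | v. v \<in> S \<and> fnorm ip v \<le> 1}"
  have bdd: "bdd_above ?X" by (rule dn_bdd[OF g])
  show ?thesis
  proof (cases "fnorm ip u = 0")
    case True
    then have "u = (\<lambda>x. 0)" using fn_eq0[OF u] by simp
    then show ?thesis using g True by simp
  next
    case False
    define n where "n = fnorm ip u"
    have n: "n > 0" using False fn_nonneg[OF u] n_def by simp
    define v where "v = (\<lambda>x. (1/n) * u x)"
    have v: "v \<in> S" unfolding v_def by (rule scale[OF u])
    have "fnorm ip v = 1" using fn_scale[OF u, of "1/n"] n n_def v_def by simp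
    then have "\<bar>p g v\<bar> \<in> {\<bar>p g v\<bar> | v. v \<in> S \<and> fnorm ip v \<le> 1}" using v by auto
    then have "\<bar>p g v\<bar> \<in> ?X" by (rule UnI2)
    then have "\<bar>p g v\<bar> \<le> dual_norm S ip p g" unfolding dual_norm_def using bdd by (rule cSup_upper)
    moreover have "p g v = p g u / n" using pscaleR[OF g u, of "1/n"] v_def by simp
    ultimately have "\<bar>p g u\<bar> / n \<le> dual_norm S ip p g" using n by simp
    then show ?thesis using n n_def by (simp add: field_simps)
  qed
qed

lemma dn_le: assumes M: "M \<ge> 0" and b: "\<And>u. u \<in> S \<Longrightarrow> \<bar>p g u\<bar> \<le> M * fnorm ip u"
  shows "dual_norm S ip p g \<le> M"
  unfolding dual_norm_def
proof (rule cSup_least)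
  show "{0} \<union> {\<bar>p g v\<bar> | v. v \<in> S \<and> fnorm ip v \<le> 1} \<noteq> {}" by simp
  fix x assume "x \<in> {0} \<union> {\<bar>p g v\<bar> | v. v \<in> S \<and> fnorm ip v \<le> 1}"
  then show "x \<le> M"
  proof
    assume "x \<in> {0}" then show ?thesis using M by simp
  next
    assume "x \<in> {\<bar>p g v\<bar> | v. v \<in> S \<and> fnorm ip v \<le> 1}"
    then obtain v where v: "v \<in> S" "fnorm ip v \<le> 1" "x = \<bar>p g v\<bar>" by blast
    have "x \<le> M * fnorm ip v" using b v by simp
    also have "\<dots> \<le> M" using v(2) M by (simp add: mult_left_le)
    finally show ?thesis .
  qed
qed

lemma unit_bound: assumes g: "g \<in> Ss" and b: "\<And>y. y \<in> S \<Longrightarrow> fnorm ip y \<le> 1 \<Longrightarrow> \<bar>p g y\<bar> \<le> K"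
  and u: "u \<in> S"
  shows "\<bar>p g u\<bar> \<le> K * fnorm ip u"
proof (cases "fnorm ip u = 0")
  case True
  then have "u = (\<lambda>x. 0)" using fn_eq0[OF u] by simp
  then show ?thesis using g True by simp
next
  case False
  define n where "n = fnorm ip u"
  have n: "n > 0" using False fn_nonneg[OF u] n_def by simp
  define v where "v = (\<lambda>x. (1/n) * u x)"
  have v: "v \<in> S" unfolding v_def by (rule scale[OF u])
  have "fnorm ip v = 1" using fn_scale[OF u, of "1/n"] n n_def v_def by simp
  then have "\<bar>p g v\<bar> \<le> K" using b v by simp
  moreover have "p g v = p g u / n" using pscaleR[OF g u, of "1/n"] v_def by simp
  ultimately have "\<bar>p g u\<bar> / n \<le> K" using n by simp
  then show ?thesis using n n_def by (simp add: field_simps)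
qed

end

lemma infsup:
  assumes D: "dsp H ipH Hs pH" and surj: "B ` V = H"
  shows "\<exists>c>0. \<forall>\<nu>\<in>Hs. \<forall>M>0. (\<forall>w\<in>V. \<bar>pH \<nu> (B w)\<bar> \<le> M * nV w)
            \<longrightarrow> (\<forall>h\<in>H. \<bar>pH \<nu> h\<bar> \<le> c * M * fnorm ipH h)"
proof -
  interpret dsp H ipH Hs pH by (rule D)
  define F where "F = {\<nu>\<in>Hs. \<forall>w\<in>V. \<bar>pH \<nu> (B w)\<bar> \<le> nV w}"
  define K where "K n = {h\<in>H. \<forall>\<nu>\<in>F. \<bar>pH \<nu> h\<bar> \<le> real n}" for n :: nat
  define d where "d u v = (if u \<in> H \<and> v \<in> H then fnorm ipH (\<lambda>x. u x - v x) else 0)" for u v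
  interpret m: Metric_space H d
  proof
    show "0 \<le> d x y" for x y by (simp add: d_def)
    show "d x y = d y x" for x y using fn_diff_commute by (auto simp: d_def)
    show "d x y = 0 \<longleftrightarrow> x = y" if "x \<in> H" "y \<in> H" for x y
    proof
      assume "d x y = 0"
      then have "(\<lambda>z. x z - y z) = (\<lambda>z. 0)" using that fn_eq0[OF diff[OF that]] by (simp add: d_def)
      then show "x = y" by (metis eq_iff_diff_eq_0 ext)
    qed (simp add: d_def)
    show "d x z \<le> d x y + d y z" if "x \<in> H" "y \<in> H" "z \<in> H" for x y z
      using that fn_diff_triangle by (simp add: d_def)
  qed
  have mc: "m.mcomplete"
    unfolding m.mcomplete_def
  proof (intro allI impI)
    fix \<sigma> assume "m.MCauchy \<sigma>"
    then have r: "\<forall>n. \<sigma> n \<in> H" and ca: "\<forall>e>0. \<exists>N. \<forall>n n'. N \<le> n \<longrightarrow> N \<le> n' \<longrightarrow> d (\<sigma> n) (\<sigma> n') < e"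
      unfolding m.MCauchy_def by auto
    have "\<forall>e>0. \<exists>N. \<forall>m\<ge>N. \<forall>n\<ge>N. fnorm ipH (\<lambda>x. \<sigma> m x - \<sigma> n x) < e"
      using ca r by (simp add: d_def)
    then obtain u where u: "u \<in> H" and lim: "(\<lambda>n. fnorm ipH (\<lambda>x. \<sigma> n x - u x)) \<longlonglongrightarrow> 0"
      using complete r by blast
    have "limitin m.mtopology \<sigma> u sequentially"
      unfolding m.limitin_metric
    proof (intro conjI allI impI u)
      fix e :: real assume e: "e > 0"
      have "\<forall>\<^sub>F n in sequentially. dist (fnorm ipH (\<lambda>x. \<sigma> n x - u x)) 0 < e"
        by (rule tendstoD[OF lim e])
      then show "\<forall>\<^sub>F n in sequentially. \<sigma> n \<in> H \<and> d (\<sigma> n) u < e"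
        by eventually_elim (use r u in \<open>simp add: d_def\<close>)
    qed
    then show "\<exists>x. limitin m.mtopology \<sigma> x sequentially" by blast
  qed
  have cover: "\<Union> (range K) = H"
  proof
    show "\<Union> (range K) \<subseteq> H" by (auto simp: K_def)
    show "H \<subseteq> \<Union> (range K)"
    proof
      fix h assume h: "h \<in> H"
      then obtain w where w: "w \<in> V" "h = B w" using surj by blast
      have "h \<in> K (nat \<lceil>nV w\<rceil>)"
        unfolding K_def
      proof (intro CollectI conjI ballI h)
        fix \<nu> assume "\<nu> \<in> F"
        then have "\<bar>pH \<nu> h\<bar> \<le> nV w" using w by (simp add: F_def)
        also have "\<dots> \<le> real (nat \<lceil>nV w\<rceil>)" by linarith
        finally show "\<bar>pH \<nu> h\<bar> \<le> real (nat \<lceil>nV w\<rceil>)" .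
      qed
      then show "h \<in> \<Union> (range K)" by blast
    qed
  qed
  have closed: "closedin m.mtopology (K n)" for n
    unfolding m.metric_closedin_iff_sequentially_closed
  proof (intro conjI allI impI)
    show "K n \<subseteq> H" by (auto simp: K_def)
    fix \<sigma> l assume a: "range \<sigma> \<subseteq> K n \<and> limitin m.mtopology \<sigma> l sequentially"
    then have l: "l \<in> H" and ev: "\<And>e. e > 0 \<Longrightarrow> \<forall>\<^sub>F k in sequentially. \<sigma> k \<in> H \<and> d (\<sigma> k) l < e"
      unfolding m.limitin_metric by auto
    have sK: "\<sigma> k \<in> K n" for k using a by blast
    show "l \<in> K n"
      unfolding K_def
    proof (intro CollectI conjI ballI l)
      fix \<nu> assume nu: "\<nu> \<in> F"
      then have nuH: "\<nu> \<in> Hs" by (simp add: F_def)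
      show "\<bar>pH \<nu> l\<bar> \<le> real n"
      proof (rule field_le_epsilon)
        fix e :: real assume e: "e > 0"
        define D where "D = dual_norm H ipH pH \<nu> + 1"
        have D: "D > 0" using dn_nonneg[OF nuH] by (simp add: D_def)
        obtain k where k: "\<sigma> k \<in> H" "d (\<sigma> k) l < e / D"
          using eventually_happens'[OF _ ev[of "e / D"]] D e by auto
        have "\<bar>pH \<nu> l\<bar> \<le> \<bar>pH \<nu> (\<sigma> k)\<bar> + \<bar>pH \<nu> (\<lambda>x. \<sigma> k x - l x)\<bar>"
          using pdiffR[OF nuH k(1) l] by linarith
        also have "\<bar>pH \<nu> (\<sigma> k)\<bar> \<le> real n" using sK[of k] nu by (simp add: K_def)
        also have "\<bar>pH \<nu> (\<lambda>x. \<sigma> k x - l x)\<bar> \<le> dual_norm H ipH pH \<nu> * fnorm ipH (\<lambda>x. \<sigma> k x - l x)"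
          by (rule dn_bound[OF nuH diff[OF k(1) l]])
        also have "\<dots> \<le> D * (e / D)"
          using k l dn_nonneg[OF nuH] fn_nonneg[OF diff[OF k(1) l]]
          by (intro mult_mono) (auto simp: d_def D_def)
        also have "\<dots> = e" using D by simp
        finally show "\<bar>pH \<nu> l\<bar> \<le> real n + e" by simp
      qed
    qed
  qed
  have "\<exists>n. m.mtopology interior_of K n \<noteq> {}"
  proof (rule ccontr)
    assume "\<nexists>n. m.mtopology interior_of K n \<noteq> {}"
    then have "m.mtopology interior_of \<Union> (range K) = {}"
      using closed by (intro m.metric_Baire_category_alt mc) auto
    then have "H = {}" using cover by (metis interior_of_topspace m.topspace_mtopology)
    then show False by auto
  qed
  then obtain N h0 where h0: "h0 \<in> m.mtopology interior_of K N" by blast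
  have "openin m.mtopology (m.mtopology interior_of K N)" by simp
  then obtain r where r: "r > 0" "m.mball h0 r \<subseteq> m.mtopology interior_of K N"
    using h0 unfolding m.openin_mtopology by blast
  have ball: "m.mball h0 r \<subseteq> K N" by (rule subset_trans[OF r(2) interior_of_subset])
  have h0K: "h0 \<in> K N" by (rule subsetD[OF interior_of_subset h0])
  have h0H: "h0 \<in> H" using h0K by (simp add: K_def)
  define c where "c = 4 * real N / r + 1"
  have "4 * real N / r \<ge> 0" using r(1) by simp
  then have c: "c > 0" by (simp add: c_def)
  have Fb: "\<bar>pH \<nu> y\<bar> \<le> 4 * real N / r * fnorm ipH y" if nu: "\<nu> \<in> F" and y: "y \<in> H" for \<nu> y
  proof -
    have nuH: "\<nu> \<in> Hs" using nu by (simp add: F_def)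
    show ?thesis
    proof (rule unit_bound[OF nuH _ y])
      fix y assume y: "y \<in> H" "fnorm ipH y \<le> 1"
      define z where "z = (\<lambda>x. h0 x + r / 2 * y x)"
      have zH: "z \<in> H" unfolding z_def by (rule add[OF h0H scale[OF y(1)]])
      have "(\<lambda>x. h0 x - z x) = (\<lambda>x. (- r / 2) * y x)" by (auto simp: z_def)
      then have "d h0 z = r / 2 * fnorm ipH y" using fn_scale[OF y(1), of "- r / 2"] zH h0H r
        by (simp add: d_def)
      also have "\<dots> < r" using y(2) r by simp
      finally have "z \<in> K N" using ball zH h0H by (auto simp: subset_iff)
      then have "\<bar>pH \<nu> z\<bar> \<le> real N" using nu by (simp add: K_def)
      moreover have "\<bar>pH \<nu> h0\<bar> \<le> real N" using h0K nu by (simp add: K_def)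
      moreover have "pH \<nu> z = pH \<nu> h0 + r / 2 * pH \<nu> y"
      proof -
        have "pH \<nu> z = pH \<nu> h0 + pH \<nu> (\<lambda>x. r / 2 * y x)" unfolding z_def by (rule paddR[OF nuH h0H scale[OF y(1)]])
        also have "pH \<nu> (\<lambda>x. r / 2 * y x) = r / 2 * pH \<nu> y" by (rule pscaleR[OF nuH y(1)])
        finally show ?thesis .
      qed
      ultimately have "\<bar>r / 2 * pH \<nu> y\<bar> \<le> 2 * real N" by linarith
      then have "r / 2 * \<bar>pH \<nu> y\<bar> \<le> 2 * real N" using r by (simp add: abs_mult)
      then show "\<bar>pH \<nu> y\<bar> \<le> 4 * real N / r" using r by (simp add: field_simps)
    qed
  qed
  show ?thesis
  proof (intro exI[of _ c] conjI c ballI allI impI)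
    fix \<nu> M h assume nu: "\<nu> \<in> Hs" and M: "M > 0" and b: "\<forall>w\<in>V. \<bar>pH \<nu> (B w)\<bar> \<le> M * nV w" and h: "h \<in> H"
    define \<nu>' where "\<nu>' = (\<lambda>x. (1 / M) * \<nu> x)"
    have nu': "\<nu>' \<in> F" unfolding F_def
    proof (intro CollectI conjI ballI)
      show "\<nu>' \<in> Hs" unfolding \<nu>'_def by (rule dscale[OF nu])
      fix w assume w: "w \<in> V"
      have BwH: "B w \<in> H" using surj w by blast
      have "pH \<nu>' (B w) = (1 / M) * pH \<nu> (B w)" unfolding \<nu>'_def by (rule gscaleL[OF nu BwH])
      then have "\<bar>pH \<nu>' (B w)\<bar> = \<bar>pH \<nu> (B w)\<bar> / M" using M by (simp add: abs_mult)
      also have "\<dots> \<le> nV w" using b w M by (simp add: field_simps)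
      finally show "\<bar>pH \<nu>' (B w)\<bar> \<le> nV w" .
    qed
    have "pH \<nu>' h = (1 / M) * pH \<nu> h" unfolding \<nu>'_def by (rule gscaleL[OF nu h])
    then have "\<bar>pH \<nu> h\<bar> / M = \<bar>pH \<nu>' h\<bar>" using M by (simp add: abs_mult)
    also have "\<dots> \<le> 4 * real N / r * fnorm ipH h" by (rule Fb[OF nu' h])
    also have "\<dots> \<le> c * fnorm ipH h" unfolding c_def by (rule mult_right_mono[OF _ fn_nonneg[OF h]]) simp
    finally show "\<bar>pH \<nu> h\<bar> \<le> c * M * fnorm ipH h" using M by (simp add: field_simps)
  qed
qed

lemma quad_zero: fixes G Q :: real assumes h: "\<And>e. 0 \<le> e * G + e\<^sup>2 * Q" shows "G = 0"
proof (rule ccontr)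
  assume G: "G \<noteq> 0"
  define k where "k = \<bar>Q\<bar> + 1"
  have k: "k > 0" by (simp add: k_def)
  define e where "e = - G / (2 * k)"
  have "e\<^sup>2 * Q \<le> e\<^sup>2 * k" by (rule mult_left_mono) (auto simp: k_def)
  moreover have "e * G + e\<^sup>2 * k = - G\<^sup>2 / (4 * k)" using k by (simp add: e_def field_simps power2_eq_square)
  moreover have "G\<^sup>2 / (4 * k) > 0" using G k by simp
  ultimately show False using h[of e] by linarith
qed

lemma lin_in: "lin_map S T F \<Longrightarrow> u \<in> S \<Longrightarrow> F u \<in> T" by (simp add: lin_map_def)
lemma lin_add: "lin_map S T F \<Longrightarrow> u \<in> S \<Longrightarrow> v \<in> S \<Longrightarrow> F (\<lambda>x. u x + v x) = (\<lambda>y. F u y + F v y)"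
  by (simp add: lin_map_def)
lemma lin_scale: "lin_map S T F \<Longrightarrow> u \<in> S \<Longrightarrow> F (\<lambda>x. c * u x) = (\<lambda>y. c * F u y)"
  by (simp add: lin_map_def)
lemma lin_addscale: assumes "hsp S ip" "lin_map S T F" "u \<in> S" "v \<in> S"
  shows "F (\<lambda>x. u x + c * v x) = (\<lambda>y. F u y + c * F v y)"
proof -
  interpret hsp S ip by fact
  have "F (\<lambda>x. u x + (\<lambda>x. c * v x) x) = (\<lambda>y. F u y + F (\<lambda>x. c * v x) y)"
    using lin_add[OF assms(2,3)] assms(4) by blast
  then show ?thesis using lin_scale[OF assms(2,4)] by simp
qed
lemma lin_diff: assumes "hsp S ip" "lin_map S T F" "u \<in> S" "v \<in> S"
  shows "F (\<lambda>x. u x - v x) = (\<lambda>y. F u y - F v y)"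
  using lin_addscale[OF assms, of "-1"] by simp

context dsp begin
lemma exp3: "g \<in> Ss \<Longrightarrow> h \<in> Ss \<Longrightarrow> k \<in> Ss \<Longrightarrow> z \<in> S \<Longrightarrow>
   p (\<lambda>x. g x + s * h x + k x) z = p g z + s * p h z + p k z"
  using gaddL[of "\<lambda>x. g x + s * h x" k z] by simp
lemma exp3R: "g \<in> Ss \<Longrightarrow> u \<in> S \<Longrightarrow> v \<in> S \<Longrightarrow> w \<in> S \<Longrightarrow>
   p g (\<lambda>x. u x + s * v x + w x) = p g u + s * p g v + p g w"
  using paddR[of g "\<lambda>x. u x + s * v x" w] by simp
lemma addscale_both: assumes g: "g \<in> Ss" and h: "h \<in> Ss" and u: "u \<in> S" and z: "z \<in> S"
  shows "p (\<lambda>y. g y + e * h y) (\<lambda>x. u x + e * z x) = p g u + e * p g z + e * (p h u + e * p h z)"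
proof -
  let ?w = "\<lambda>x. u x + e * z x"
  have w: "?w \<in> S" by (rule add[OF u scale[OF z]])
  have 1: "p (\<lambda>y. g y + e * h y) ?w = p g ?w + p (\<lambda>y. e * h y) ?w" by (rule gaddL[OF g dscale[OF h] w])
  have 2: "p (\<lambda>y. e * h y) ?w = e * p h ?w" by (rule gscaleL[OF h w])
  have 3: "p g ?w = p g u + p g (\<lambda>x. e * z x)" by (rule paddR[OF g u scale[OF z]])
  have 4: "p h ?w = p h u + p h (\<lambda>x. e * z x)" by (rule paddR[OF h u scale[OF z]])
  have 5: "p g (\<lambda>x. e * z x) = e * p g z" by (rule pscaleR[OF g z])
  have 6: "p h (\<lambda>x. e * z x) = e * p h z" by (rule pscaleR[OF h z])
  show ?thesis unfolding 1 2 3 4 5 6 ..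
qed

lemma energy_exp: assumes f: "f \<in> Ss" and Aw: "A w \<in> Ss" and w: "w \<in> S"
  shows "energy p A f w = 1/2 * p (A w) w - p f w"
proof -
  have "p (\<lambda>x. 1/2 * A w x - f x) w = p (\<lambda>x. 1/2 * A w x) w - p f w"
    by (rule gdiffL[OF dscale[OF Aw] f w])
  also have "p (\<lambda>x. 1/2 * A w x) w = 1/2 * p (A w) w" by (rule gscaleL[OF Aw w])
  finally show ?thesis unfolding energy_def .
qed
end

lemma saddle_facts:
  assumes DV: "dsp V ipV Vs pV" and DH: "dsp H ipH Hs pH"
    and Al: "lin_map V Vs A" and Bl: "lin_map V H B" and f: "f \<in> Vs"
    and sad: "is_saddle V Hs (lagrangian pV pH A B f) u lam"
  shows "u \<in> V" "lam \<in> Hs" "\<forall>\<nu>\<in>Hs. pH \<nu> (B u) = 0"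
    "\<forall>z\<in>V. 1/2 * (pV (A u) z + pV (A z) u) - pV f z - pH lam (B z) = 0"
    "\<forall>w\<in>V. energy pV A f u \<le> 1/2 * pV (A w) w - pV f w - pH lam (B w)"
    "energy pV A f u = 1/2 * pV (A u) u - pV f u"
proof -
  interpret v: dsp V ipV Vs pV by fact
  interpret h: dsp H ipH Hs pH by fact
  show u: "u \<in> V" and l: "lam \<in> Hs" using sad by (auto simp: is_saddle_def)
  have s1: "\<And>\<nu>. \<nu> \<in> Hs \<Longrightarrow> lagrangian pV pH A B f u \<nu> \<le> lagrangian pV pH A B f u lam"
   and s2: "\<And>w. w \<in> V \<Longrightarrow> lagrangian pV pH A B f u lam \<le> lagrangian pV pH A B f w lam"
    using sad by (auto simp: is_saddle_def)
  have Bu: "B u \<in> H" using lin_in[OF Bl u] .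
  have ge: "pH lam (B u) \<le> pH \<nu> (B u)" if "\<nu> \<in> Hs" for \<nu>
    using s1[OF that] by (simp add: lagrangian_def)
  have "pH lam (B u) \<le> 0" using ge[OF h.dzero] Bu by simp
  moreover have "pH lam (B u) \<le> 2 * pH lam (B u)"
    using ge[OF h.dadd[OF l l]] Bu l by simp
  ultimately have z: "pH lam (B u) = 0" by linarith
  show c: "\<forall>\<nu>\<in>Hs. pH \<nu> (B u) = 0"
  proof
    fix \<nu> assume nu: "\<nu> \<in> Hs"
    have "0 \<le> pH \<nu> (B u)" using ge[OF nu] z by simp
    moreover have "0 \<le> pH (\<lambda>x. (-1) * \<nu> x) (B u)" using ge[OF h.dscale[OF nu, of "-1"]] z by linarith
    moreover have "pH (\<lambda>x. (-1) * \<nu> x) (B u) = - pH \<nu> (B u)" using h.gscaleL[OF nu Bu, of "-1"] by simp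
    ultimately show "pH \<nu> (B u) = 0" by linarith
  qed
  have Au: "A u \<in> Vs" using lin_in[OF Al u] .
  show en: "energy pV A f u = 1/2 * pV (A u) u - pV f u" by (rule v.energy_exp[where A=A and w=u, OF f Au u])
  have Lw: "lagrangian pV pH A B f w lam = 1/2 * pV (A w) w - pV f w - pH lam (B w)" if "w \<in> V" for w
    using v.energy_exp[where A=A and w=w, OF f lin_in[OF Al that] that] by (simp add: lagrangian_def)
  show "\<forall>w\<in>V. energy pV A f u \<le> 1/2 * pV (A w) w - pV f w - pH lam (B w)"
  proof
    fix w assume w: "w \<in> V"
    have "lagrangian pV pH A B f u lam = energy pV A f u" using z by (simp add: lagrangian_def)
    then show "energy pV A f u \<le> 1/2 * pV (A w) w - pV f w - pH lam (B w)" using s2[OF w] Lw[OF w] by simp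
  qed
  show "\<forall>z\<in>V. 1/2 * (pV (A u) z + pV (A z) u) - pV f z - pH lam (B z) = 0"
  proof
    fix z assume zV: "z \<in> V"
    have Az: "A z \<in> Vs" using lin_in[OF Al zV] .
    have Bz: "B z \<in> H" using lin_in[OF Bl zV] .
    let ?G = "1/2 * (pV (A u) z + pV (A z) u) - pV f z - pH lam (B z)"
    show "?G = 0"
    proof (rule quad_zero)
      fix e :: real
      define w where "w = (\<lambda>x. u x + e * z x)"
      have w: "w \<in> V" using u zV by (simp add: w_def)
      have Aw: "A w = (\<lambda>y. A u y + e * A z y)" unfolding w_def by (rule lin_addscale[OF v.hsp_axioms Al u zV])
      have Bw: "B w = (\<lambda>y. B u y + e * B z y)" unfolding w_def by (rule lin_addscale[OF v.hsp_axioms Bl u zV])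
      have e1: "pV (A w) w = pV (A u) u + e * pV (A u) z + e * (pV (A z) u + e * pV (A z) z)"
        unfolding Aw unfolding w_def by (rule v.addscale_both[OF Au Az u zV])
      have e2: "pV f w = pV f u + e * pV f z" unfolding w_def
        using v.paddR[OF f u v.scale[OF zV]] v.pscaleR[OF f zV] by simp
      have e3: "pH lam (B w) = pH lam (B u) + e * pH lam (B z)" unfolding Bw
        using h.paddR[OF l Bu h.scale[OF Bz]] h.pscaleR[OF l Bz] by simp
      have "lagrangian pV pH A B f u lam \<le> lagrangian pV pH A B f w lam" by (rule s2[OF w])
      then have "1/2 * pV (A u) u - pV f u - pH lam (B u) \<le> 1/2 * pV (A w) w - pV f w - pH lam (B w)"
        using Lw[OF u] Lw[OF w] by simp
      then show "0 \<le> e * ?G + e\<^sup>2 * (1/2 * pV (A z) z)"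
        unfolding e1 e2 e3 by (simp add: power2_eq_square algebra_simps)
    qed
  qed
qed

lemma ev_neq0: "eventually (\<lambda>s::real. s \<noteq> 0) (at 0)"
  by (simp add: eventually_at_filter)

lemma small_o_tendsto: assumes "small_o g" shows "(g \<longlongrightarrow> 0) (at 0)"
proof -
  have l: "((\<lambda>s. g s / s) \<longlongrightarrow> 0) (at 0)" using assms by (simp add: small_o_def)
  have "((\<lambda>s. g s / s * s) \<longlongrightarrow> 0 * 0) (at 0)" by (intro tendsto_mult l tendsto_ident_at)
  then have "((\<lambda>s. g s / s * s) \<longlongrightarrow> 0) (at 0)" by simp
  moreover have "eventually (\<lambda>s. g s / s * s = g s) (at 0)"
    using ev_neq0 by eventually_elim simp
  ultimately show ?thesis by (rule Lim_transform_eventually)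
qed

lemma small_o_nonneg: "small_o g \<Longrightarrow> g s \<ge> 0" by (simp add: small_o_def)

lemma small_o_div_abs: assumes "small_o g" shows "((\<lambda>s. g s / \<bar>s\<bar>) \<longlongrightarrow> 0) (at 0)"
proof -
  have l: "((\<lambda>s. g s / s) \<longlongrightarrow> 0) (at 0)" using assms by (simp add: small_o_def)
  have "((\<lambda>s. \<bar>g s / s\<bar>) \<longlongrightarrow> 0) (at 0)" by (rule tendsto_rabs_zero[OF l])
  moreover have "(\<lambda>s. \<bar>g s / s\<bar>) = (\<lambda>s. g s / \<bar>s\<bar>)"
  proof
    fix s show "\<bar>g s / s\<bar> = g s / \<bar>s\<bar>" using small_o_nonneg[OF assms, of s] by (simp add: abs_divide)
  qed
  ultimately show ?thesis by simp
qed

lemma abs_tendsto0: "((\<lambda>s::real. \<bar>s\<bar>) \<longlongrightarrow> 0) (at 0)"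
  using tendsto_rabs_zero[OF tendsto_ident_at[of 0 UNIV]] by simp

lemma squeeze_lim:
  fixes D X Y r1 r2 \<Phi> :: "real \<Rightarrow> real"
  assumes ev: "eventually (\<lambda>s. s * X s + r2 s \<le> D s \<and> D s \<le> s * Y s + r1 s
                  \<and> \<bar>X s - T\<bar> + \<bar>Y s - T\<bar> + \<bar>r1 s\<bar> / \<bar>s\<bar> + \<bar>r2 s\<bar> / \<bar>s\<bar> \<le> \<Phi> s) (at 0)"
    and lim: "(\<Phi> \<longlongrightarrow> 0) (at 0)"
  shows "((\<lambda>s. D s / s) \<longlongrightarrow> T) (at 0)"
proof -
  have "eventually (\<lambda>s. norm (D s / s - T) \<le> \<Phi> s) (at 0)"
    using ev ev_neq0
  proof eventually_elim
    case (elim s)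
    then have s: "s \<noteq> 0" and lo: "s * X s + r2 s \<le> D s" and up: "D s \<le> s * Y s + r1 s"
      and ph: "\<bar>X s - T\<bar> + \<bar>Y s - T\<bar> + \<bar>r1 s\<bar> / \<bar>s\<bar> + \<bar>r2 s\<bar> / \<bar>s\<bar> \<le> \<Phi> s" by auto
    have e1: "D s / s - (X s + r2 s / s) = (D s - s * X s - r2 s) / s" using s by (simp add: field_simps)
    have e2: "(Y s + r1 s / s) - D s / s = (s * Y s + r1 s - D s) / s" using s by (simp add: field_simps)
    have a1: "\<bar>r1 s / s\<bar> = \<bar>r1 s\<bar> / \<bar>s\<bar>" and a2: "\<bar>r2 s / s\<bar> = \<bar>r2 s\<bar> / \<bar>s\<bar>" by simp_all
    have "D s / s - T \<le> \<bar>X s - T\<bar> + \<bar>Y s - T\<bar> + \<bar>r1 s / s\<bar> + \<bar>r2 s / s\<bar> \<and>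
          T - D s / s \<le> \<bar>X s - T\<bar> + \<bar>Y s - T\<bar> + \<bar>r1 s / s\<bar> + \<bar>r2 s / s\<bar>"
    proof (cases "s > 0")
      case True
      have "(D s - s * X s - r2 s) / s \<ge> 0" using lo True by simp
      moreover have "(s * Y s + r1 s - D s) / s \<ge> 0" using up True by simp
      then have "D s / s \<le> Y s + r1 s / s" "X s + r2 s / s \<le> D s / s" using e1 e2 \<open>(D s - s * X s - r2 s) / s \<ge> 0\<close> by linarith+
      then show ?thesis using abs_ge_self[of "X s - T"] abs_ge_minus_self[of "X s - T"] abs_ge_self[of "Y s - T"] abs_ge_minus_self[of "Y s - T"]
        abs_ge_self[of "r1 s / s"] abs_ge_minus_self[of "r1 s / s"] abs_ge_self[of "r2 s / s"] abs_ge_minus_self[of "r2 s / s"] by linarith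
    next
      case False
      then have neg: "s < 0" using s by simp
      have "(D s - s * X s - r2 s) / s \<le> 0" using lo neg by (simp add: divide_nonneg_neg)
      moreover have "(s * Y s + r1 s - D s) / s \<le> 0" using up neg by (simp add: divide_nonneg_neg)
      then have "D s / s \<le> X s + r2 s / s" "Y s + r1 s / s \<le> D s / s" using e1 e2 \<open>(D s - s * X s - r2 s) / s \<le> 0\<close> by linarith+
      then show ?thesis using abs_ge_self[of "X s - T"] abs_ge_minus_self[of "X s - T"] abs_ge_self[of "Y s - T"] abs_ge_minus_self[of "Y s - T"]
        abs_ge_self[of "r1 s / s"] abs_ge_minus_self[of "r1 s / s"] abs_ge_self[of "r2 s / s"] abs_ge_minus_self[of "r2 s / s"] by linarith
    qed
    then show "norm (D s / s - T) \<le> \<Phi> s" using ph a1 a2 by (simp add: abs_le_iff)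
  qed
  then have "((\<lambda>s. D s / s - T) \<longlongrightarrow> 0) (at 0)" by (rule Lim_null_comparison[OF _ lim])
  then show ?thesis by (simp add: LIM_zero_iff)
qed

lemma abs_mult_le: fixes s y P :: real shows "\<bar>y\<bar> \<le> P \<Longrightarrow> \<bar>s * y\<bar> \<le> \<bar>s\<bar> * P"
  by (simp add: abs_mult mult_left_mono)

lemma mono2: fixes a b A B :: real
  assumes "0 \<le> a" "a \<le> A" "0 \<le> b" "b \<le> B" shows "a * b \<le> A * B"
  by (rule mult_mono[OF assms(2,4) _ assms(3)]) (use assms in linarith)

lemma mono3: fixes a b c A B C :: real
  assumes "0 \<le> a" "a \<le> A" "0 \<le> b" "b \<le> B" "0 \<le> c" "c \<le> C" shows "a * b * c \<le> A * B * C"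
  by (rule mono2[OF _ mono2[OF assms(1-4)] assms(5,6)]) (use assms in simp)

lemma mono4: fixes a b c d A B C D :: real
  assumes "0 \<le> a" "a \<le> A" "0 \<le> b" "b \<le> B" "0 \<le> c" "c \<le> C" "0 \<le> d" "d \<le> D"
  shows "a * b * c * d \<le> A * B * C * D"
  by (rule mono2[OF _ mono3[OF assms(1-6)] assms(7,8)]) (use assms in simp)

theorem corollary2p2:
  fixes t0 t1 t :: real
    and \<Omega> :: "real \<Rightarrow> (real^'d) set"
    and V Vs H Hs :: "real \<Rightarrow> (real^'d \<Rightarrow> real) set"
    and ipV ipH pV pH :: "real \<Rightarrow> (real^'d \<Rightarrow> real) \<Rightarrow> (real^'d \<Rightarrow> real) \<Rightarrow> real"
    and A B :: "real \<Rightarrow> (real^'d \<Rightarrow> real) \<Rightarrow> (real^'d \<Rightarrow> real)"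
    and f :: "real^'d \<Rightarrow> real"
    and cAlo cAhi cB :: real
    and u lam :: "real \<Rightarrow> (real^'d \<Rightarrow> real)"
    and \<phi> \<phi>i :: "real \<Rightarrow> real^'d \<Rightarrow> real^'d"
    and A1 B1 :: "(real^'d \<Rightarrow> real) \<Rightarrow> (real^'d \<Rightarrow> real)"
    and A2 B2 :: "real \<Rightarrow> (real^'d \<Rightarrow> real) \<Rightarrow> (real^'d \<Rightarrow> real)"
    and f1 :: "real^'d \<Rightarrow> real"
    and f2 :: "real \<Rightarrow> real^'d \<Rightarrow> real"
    and oA oB oF :: "real \<Rightarrow> real"
  assumes t01: "t0 < t1"
    and dom: "\<And>\<tau>. \<tau> \<in> {t0<..<t1} \<Longrightarrow> open (\<Omega> \<tau>) \<and> connected (\<Omega> \<tau>)"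
    and spV: "\<And>\<tau>. \<tau> \<in> {t0<..<t1} \<Longrightarrow> hilbert_fspace (V \<tau>) (ipV \<tau>)
                 \<and> dual_fspace (V \<tau>) (ipV \<tau>) (Vs \<tau>) (pV \<tau>)"
    and spH: "\<And>\<tau>. \<tau> \<in> {t0<..<t1} \<Longrightarrow> hilbert_fspace (H \<tau>) (ipH \<tau>)
                 \<and> dual_fspace (H \<tau>) (ipH \<tau>) (Hs \<tau>) (pH \<tau>)"
    and supp: "\<And>\<tau>. \<tau> \<in> {t0<..<t1} \<Longrightarrow> supported_in (\<Omega> \<tau>) (V \<tau>) \<and> supported_in (\<Omega> \<tau>) (Vs \<tau>)
                 \<and> supported_in (\<Omega> \<tau>) (H \<tau>) \<and> supported_in (\<Omega> \<tau>) (Hs \<tau>)"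
    and cA: "0 < cAlo" "cAlo \<le> cAhi"
    and A_lin: "\<And>\<tau>. \<tau> \<in> {t0<..<t1} \<Longrightarrow> lin_map (V \<tau>) (Vs \<tau>) (A \<tau>)"
    and A_coer: "\<And>\<tau> w. \<tau> \<in> {t0<..<t1} \<Longrightarrow> w \<in> V \<tau> \<Longrightarrow>
                   pV \<tau> (A \<tau> w) w \<ge> cAlo * (fnorm (ipV \<tau>) w)\<^sup>2"
    and A_bdd: "\<And>\<tau> w. \<tau> \<in> {t0<..<t1} \<Longrightarrow> w \<in> V \<tau> \<Longrightarrow>
                   dual_norm (V \<tau>) (ipV \<tau>) (pV \<tau>) (A \<tau> w) \<le> cAhi * fnorm (ipV \<tau>) w"
    and B_lin: "\<And>\<tau>. \<tau> \<in> {t0<..<t1} \<Longrightarrow> lin_map (V \<tau>) (H \<tau>) (B \<tau>) \<and> B \<tau> ` V \<tau> = H \<tau>"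
    and B_bdd: "\<And>\<tau> w. \<tau> \<in> {t0<..<t1} \<Longrightarrow> w \<in> V \<tau> \<Longrightarrow>
                   fnorm (ipH \<tau>) (B \<tau> w) \<le> cB * fnorm (ipV \<tau>) w"
    and f_in: "\<And>\<tau>. \<tau> \<in> {t0<..<t1} \<Longrightarrow> f \<in> Vs \<tau>"
    and u_min: "\<And>\<tau>. \<tau> \<in> {t0<..<t1} \<Longrightarrow>
                  is_minimizer (eq_cone (V \<tau>) (B \<tau>)) (energy (pV \<tau>) (A \<tau>) f) (u \<tau>)"
    and saddle: "\<And>\<tau>. \<tau> \<in> {t0<..<t1} \<Longrightarrow>
                  is_saddle (V \<tau>) (Hs \<tau>) (lagrangian (pV \<tau>) (pH \<tau>) (A \<tau>) (B \<tau>) f) (u \<tau>) (lam \<tau>)"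
    and t_in: "t \<in> {t0<..<t1}"
    and phi_inv: "\<And>s x. s \<in> {t0 - t..t1 - t} \<Longrightarrow> \<phi> s (\<phi>i s x) = x \<and> \<phi>i s (\<phi> s x) = x"
    and phi_reg: "C1_W1inf_loc {t0 - t..t1 - t} \<phi>" "C1_W1inf_loc {t0 - t..t1 - t} \<phi>i"
    and phi_dom: "\<And>s. s \<in> {t0 - t<..<t1 - t} \<Longrightarrow> \<Omega> (t + s) = \<phi> s ` \<Omega> t"
    and pb_V: "pullback_unif {t0 - t<..<t1 - t} \<phi> (\<lambda>s. V (t + s)) (\<lambda>s. fnorm (ipV (t + s)))
                  (V t) (fnorm (ipV t))"
    and pb_Vs: "pullback_unif {t0 - t<..<t1 - t} \<phi> (\<lambda>s. Vs (t + s))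
                  (\<lambda>s. dual_norm (V (t + s)) (ipV (t + s)) (pV (t + s)))
                  (Vs t) (dual_norm (V t) (ipV t) (pV t))"
    and pb_H: "pullback_unif {t0 - t<..<t1 - t} \<phi> (\<lambda>s. H (t + s)) (\<lambda>s. fnorm (ipH (t + s)))
                  (H t) (fnorm (ipH t))"
    and pb_Hs: "pullback_unif {t0 - t<..<t1 - t} \<phi> (\<lambda>s. Hs (t + s))
                  (\<lambda>s. dual_norm (H (t + s)) (ipH (t + s)) (pH (t + s)))
                  (Hs t) (dual_norm (H t) (ipH t) (pH t))"
    and A_exp: "\<And>s v z. s \<in> {t0 - t<..<t1 - t} \<Longrightarrow> v \<in> V (t + s) \<Longrightarrow> z \<in> V (t + s) \<Longrightarrow>
                  pV (t + s) (A (t + s) v) z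
                = pV t (\<lambda>x. A t (v \<circ> \<phi> s) x + s * A1 (v \<circ> \<phi> s) x + A2 s (v \<circ> \<phi> s) x) (z \<circ> \<phi> s)"
    and A1_bdd: "lin_map (V t) (Vs t) A1"
                "\<exists>C. \<forall>w\<in>V t. dual_norm (V t) (ipV t) (pV t) (A1 w) \<le> C * fnorm (ipV t) w"
    and A2_bdd: "\<And>s. s \<in> {t0 - t<..<t1 - t} \<Longrightarrow> lin_map (V t) (Vs t) (A2 s)
                  \<and> (\<exists>C. \<forall>w\<in>V t. dual_norm (V t) (ipV t) (pV t) (A2 s w) \<le> C * fnorm (ipV t) w)"
    and A2_small: "small_o oA"
                  "\<And>s w. s \<in> {t0 - t<..<t1 - t} \<Longrightarrow> w \<in> V t \<Longrightarrow>
                     dual_norm (V t) (ipV t) (pV t) (A2 s w) \<le> oA s * fnorm (ipV t) w"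
    and B_exp: "\<And>s \<mu> v. s \<in> {t0 - t<..<t1 - t} \<Longrightarrow> \<mu> \<in> Hs (t + s) \<Longrightarrow> v \<in> V (t + s) \<Longrightarrow>
                  pH (t + s) \<mu> (B (t + s) v)
                = pH t (\<mu> \<circ> \<phi> s) (\<lambda>x. B t (v \<circ> \<phi> s) x + s * B1 (v \<circ> \<phi> s) x + B2 s (v \<circ> \<phi> s) x)"
    and B1_bdd: "lin_map (V t) (H t) B1"
                "\<exists>C. \<forall>w\<in>V t. fnorm (ipH t) (B1 w) \<le> C * fnorm (ipV t) w"
    and B2_bdd: "\<And>s. s \<in> {t0 - t<..<t1 - t} \<Longrightarrow> lin_map (V t) (H t) (B2 s)
                  \<and> (\<exists>C. \<forall>w\<in>V t. fnorm (ipH t) (B2 s w) \<le> C * fnorm (ipV t) w)"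
    and Bs_surj: "\<And>s. s \<in> {t0 - t<..<t1 - t} \<Longrightarrow>
                  (\<lambda>w x. B t w x + s * B1 w x + B2 s w x) ` V t = H t"
    and B2_small: "small_o oB"
                  "\<And>s w. s \<in> {t0 - t<..<t1 - t} \<Longrightarrow> w \<in> V t \<Longrightarrow>
                     fnorm (ipH t) (B2 s w) \<le> oB s * fnorm (ipV t) w"
    and f_exp: "\<And>s v. s \<in> {t0 - t<..<t1 - t} \<Longrightarrow> v \<in> V (t + s) \<Longrightarrow>
                  pV (t + s) f v = pV t (\<lambda>x. f x + s * f1 x + f2 s x) (v \<circ> \<phi> s)"
    and f1_in: "f1 \<in> Vs t"
    and f2_in: "\<And>s. s \<in> {t0 - t<..<t1 - t} \<Longrightarrow> f2 s \<in> Vs t"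
    and f2_small: "small_o oF"
                  "\<And>s. s \<in> {t0 - t<..<t1 - t} \<Longrightarrow> dual_norm (V t) (ipV t) (pV t) (f2 s) \<le> oF s"
  shows "(\<forall>s\<in>{t0 - t<..<t1 - t}.
            bij_betw (\<lambda>\<mu>. \<mu> \<circ> \<phi> s) (eq_cone_dual (Hs (t + s))) (eq_cone_dual (Hs t)))
       \<and> ((\<lambda>s. (energy (pV (t + s)) (A (t + s)) f (u (t + s)) - energy (pV t) (A t) f (u t)) / s)
            \<longlongrightarrow> pV t (\<lambda>x. (1/2) * A1 (u t) x - f1 x) (u t) - pH t (lam t) (B1 (u t))) (at 0)"
  proof -
  define I where "I = {t0 - t<..<t1 - t}"
  have tau: "t + s \<in> {t0<..<t1}" if "s \<in> I" for s using that by (auto simp: I_def)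
  have I0: "0 \<in> I" using t_in by (auto simp: I_def)
  have dV: "dsp (V \<tau>) (ipV \<tau>) (Vs \<tau>) (pV \<tau>)" if "\<tau> \<in> {t0<..<t1}" for \<tau>
    using spV[OF that] by (simp add: dsp_def hsp_def dsp_axioms_def)
  have dH: "dsp (H \<tau>) (ipH \<tau>) (Hs \<tau>) (pH \<tau>)" if "\<tau> \<in> {t0<..<t1}" for \<tau>
    using spH[OF that] by (simp add: dsp_def hsp_def dsp_axioms_def)
  interpret Vt: dsp "V t" "ipV t" "Vs t" "pV t" by (rule dV[OF t_in])
  interpret Ht: dsp "H t" "ipH t" "Hs t" "pH t" by (rule dH[OF t_in])
  have part1: "\<forall>s\<in>{t0 - t<..<t1 - t}. bij_betw (\<lambda>\<mu>. \<mu> \<circ> \<phi> s) (eq_cone_dual (Hs (t + s))) (eq_cone_dual (Hs t))"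
    using pb_Hs by (simp add: pullback_unif_def eq_cone_dual_def)
  have SF1: "u \<tau> \<in> V \<tau>" if "\<tau> \<in> {t0<..<t1}" for \<tau>
    by (rule saddle_facts(1)[OF dV[OF that] dH[OF that] A_lin[OF that] conjunct1[OF B_lin[OF that]] f_in[OF that] saddle[OF that]])
  have SF2: "lam \<tau> \<in> Hs \<tau>" if "\<tau> \<in> {t0<..<t1}" for \<tau>
    by (rule saddle_facts(2)[OF dV[OF that] dH[OF that] A_lin[OF that] conjunct1[OF B_lin[OF that]] f_in[OF that] saddle[OF that]])
  have SF3: "\<forall>\<nu>\<in>Hs \<tau>. pH \<tau> \<nu> (B \<tau> (u \<tau>)) = 0" if "\<tau> \<in> {t0<..<t1}" for \<tau>
    by (rule saddle_facts(3)[OF dV[OF that] dH[OF that] A_lin[OF that] conjunct1[OF B_lin[OF that]] f_in[OF that] saddle[OF that]])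
  have SF4: "\<forall>z\<in>V \<tau>. 1/2 * (pV \<tau> (A \<tau> (u \<tau>)) z + pV \<tau> (A \<tau> z) (u \<tau>)) - pV \<tau> f z - pH \<tau> (lam \<tau>) (B \<tau> z) = 0" if "\<tau> \<in> {t0<..<t1}" for \<tau>
    by (rule saddle_facts(4)[OF dV[OF that] dH[OF that] A_lin[OF that] conjunct1[OF B_lin[OF that]] f_in[OF that] saddle[OF that]])
  have SF5: "\<forall>w\<in>V \<tau>. energy (pV \<tau>) (A \<tau>) f (u \<tau>) \<le> 1/2 * pV \<tau> (A \<tau> w) w - pV \<tau> f w - pH \<tau> (lam \<tau>) (B \<tau> w)" if "\<tau> \<in> {t0<..<t1}" for \<tau>
    by (rule saddle_facts(5)[OF dV[OF that] dH[OF that] A_lin[OF that] conjunct1[OF B_lin[OF that]] f_in[OF that] saddle[OF that]])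
  have SF6: "energy (pV \<tau>) (A \<tau>) f (u \<tau>) = 1/2 * pV \<tau> (A \<tau> (u \<tau>)) (u \<tau>) - pV \<tau> f (u \<tau>)" if "\<tau> \<in> {t0<..<t1}" for \<tau>
    by (rule saddle_facts(6)[OF dV[OF that] dH[OF that] A_lin[OF that] conjunct1[OF B_lin[OF that]] f_in[OF that] saddle[OF that]])
  have bV: "bij_betw (\<lambda>v. v \<circ> \<phi> s) (V (t + s)) (V t)" if "s \<in> I" for s
    using pb_V that by (simp add: pullback_unif_def I_def)
  have bHs: "bij_betw (\<lambda>v. v \<circ> \<phi> s) (Hs (t + s)) (Hs t)" if "s \<in> I" for s
    using pb_Hs that by (simp add: pullback_unif_def I_def)
  have pV_in: "v \<circ> \<phi> s \<in> V t" if "s \<in> I" "v \<in> V (t + s)" for s v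
    using bV[OF that(1)] that(2) by (auto simp: bij_betw_def)
  have pV_ex: "\<exists>w\<in>V (t + s). z = w \<circ> \<phi> s" if "s \<in> I" "z \<in> V t" for s z
    using bV[OF that(1)] that(2) by (auto simp: bij_betw_def)
  have pHs_in: "v \<circ> \<phi> s \<in> Hs t" if "s \<in> I" "v \<in> Hs (t + s)" for s v
    using bHs[OF that(1)] that(2) by (auto simp: bij_betw_def)
  have pHs_ex: "\<exists>w\<in>Hs (t + s). z = w \<circ> \<phi> s" if "s \<in> I" "z \<in> Hs t" for s z
    using bHs[OF that(1)] that(2) by (auto simp: bij_betw_def)
  have A1_in: "A1 v \<in> Vs t" if "v \<in> V t" for v using lin_in[OF A1_bdd(1) that] .
  have A2_in: "A2 s v \<in> Vs t" if "s \<in> I" "v \<in> V t" for s v using lin_in[OF conjunct1[OF A2_bdd] that(2)] that(1) by (simp add: I_def)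
  have A_in: "A t v \<in> Vs t" if "v \<in> V t" for v using lin_in[OF A_lin[OF t_in] that] .
  have B1_in: "B1 v \<in> H t" if "v \<in> V t" for v using lin_in[OF B1_bdd(1) that] .
  have B2_in: "B2 s v \<in> H t" if "s \<in> I" "v \<in> V t" for s v using lin_in[OF conjunct1[OF B2_bdd] that(2)] that(1) by (simp add: I_def)
  have B_in: "B t v \<in> H t" if "v \<in> V t" for v using lin_in[OF conjunct1[OF B_lin[OF t_in]] that] .
  have ft: "f \<in> Vs t" using f_in[OF t_in] .
  have f2_in': "f2 s \<in> Vs t" if "s \<in> I" for s using f2_in that by (simp add: I_def)
  define a0 where "a0 v z = pV t (A t v) z" for v z
  define a1 where "a1 v z = pV t (A1 v) z" for v z
  define a2 where "a2 s v z = pV t (A2 s v) z" for s v z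
  define F0 where "F0 z = pV t f z" for z
  define F1 where "F1 z = pV t f1 z" for z
  define F2 where "F2 s z = pV t (f2 s) z" for s z
  define b0 where "b0 \<mu> v = pH t \<mu> (B t v)" for \<mu> v
  define b1 where "b1 \<mu> v = pH t \<mu> (B1 v)" for \<mu> v
  define b2 where "b2 s \<mu> v = pH t \<mu> (B2 s v)" for s \<mu> v
  have Aexp: "pV (t + s) (A (t + s) v) z = a0 (v \<circ> \<phi> s) (z \<circ> \<phi> s) + s * a1 (v \<circ> \<phi> s) (z \<circ> \<phi> s) + a2 s (v \<circ> \<phi> s) (z \<circ> \<phi> s)"
    if s: "s \<in> I" and v: "v \<in> V (t + s)" and z: "z \<in> V (t + s)" for s v z
    using A_exp[of s v z] s v z Vt.exp3[OF A_in A1_in A2_in[OF s]] pV_in[OF s v] pV_in[OF s z]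
    by (simp add: I_def a0_def a1_def a2_def)
  have fexp: "pV (t + s) f v = F0 (v \<circ> \<phi> s) + s * F1 (v \<circ> \<phi> s) + F2 s (v \<circ> \<phi> s)"
    if s: "s \<in> I" and v: "v \<in> V (t + s)" for s v
    using f_exp[of s v] s v Vt.exp3[OF ft f1_in f2_in'[OF s]] pV_in[OF s v]
    by (simp add: I_def F0_def F1_def F2_def)
  have Bexp: "pH (t + s) \<mu> (B (t + s) v) = b0 (\<mu> \<circ> \<phi> s) (v \<circ> \<phi> s) + s * b1 (\<mu> \<circ> \<phi> s) (v \<circ> \<phi> s) + b2 s (\<mu> \<circ> \<phi> s) (v \<circ> \<phi> s)"
    if s: "s \<in> I" and mu: "\<mu> \<in> Hs (t + s)" and v: "v \<in> V (t + s)" for s \<mu> v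
    using B_exp[of s \<mu> v] s mu v Ht.exp3R[OF pHs_in[OF s mu] B_in B1_in B2_in[OF s]] pV_in[OF s v]
    by (simp add: I_def b0_def b1_def b2_def)
  define U where "U s = u (t + s) \<circ> \<phi> s" for s
  define Lm where "Lm s = lam (t + s) \<circ> \<phi> s" for s
  have U_in: "U s \<in> V t" if "s \<in> I" for s using pV_in[OF that] SF1[OF tau[OF that]] by (simp add: U_def)
  have Lm_in: "Lm s \<in> Hs t" if "s \<in> I" for s using pHs_in[OF that] SF2[OF tau[OF that]] by (simp add: Lm_def)
  have T1: "b0 \<mu> (U s) + s * b1 \<mu> (U s) + b2 s \<mu> (U s) = 0" if s: "s \<in> I" and mu: "\<mu> \<in> Hs t" for s \<mu>
  proof -
    obtain \<nu> where nu: "\<nu> \<in> Hs (t + s)" "\<mu> = \<nu> \<circ> \<phi> s" using pHs_ex[OF s mu] by blast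
    have "pH (t + s) \<nu> (B (t + s) (u (t + s))) = 0" using SF3[OF tau[OF s]] nu(1) by blast
    then show ?thesis using Bexp[OF s nu(1) SF1[OF tau[OF s]]] nu(2) by (simp add: U_def)
  qed
  have T2: "1/2 * ((a0 (U s) z + s * a1 (U s) z + a2 s (U s) z) + (a0 z (U s) + s * a1 z (U s) + a2 s z (U s)))
      - (F0 z + s * F1 z + F2 s z) - (b0 (Lm s) z + s * b1 (Lm s) z + b2 s (Lm s) z) = 0"
    if s: "s \<in> I" and z: "z \<in> V t" for s z
  proof -
    obtain w where w: "w \<in> V (t + s)" "z = w \<circ> \<phi> s" using pV_ex[OF s z] by blast
    have uu: "u (t + s) \<in> V (t + s)" and ll: "lam (t + s) \<in> Hs (t + s)" using SF1[OF tau[OF s]] SF2[OF tau[OF s]] by auto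
    have "1/2 * (pV (t + s) (A (t + s) (u (t + s))) w + pV (t + s) (A (t + s) w) (u (t + s))) - pV (t + s) f w
       - pH (t + s) (lam (t + s)) (B (t + s) w) = 0" using SF4[OF tau[OF s]] w(1) by blast
    then show ?thesis using Aexp[OF s uu w(1)] Aexp[OF s w(1) uu] fexp[OF s w(1)] Bexp[OF s ll w(1)] w(2)
      by (simp add: U_def Lm_def)
  qed
  have T3: "energy (pV (t + s)) (A (t + s)) f (u (t + s)) = 1/2 * (a0 (U s) (U s) + s * a1 (U s) (U s) + a2 s (U s) (U s))
      - (F0 (U s) + s * F1 (U s) + F2 s (U s))" if s: "s \<in> I" for s
  proof -
    have uu: "u (t + s) \<in> V (t + s)" using SF1[OF tau[OF s]] by auto
    show ?thesis using SF6[OF tau[OF s]] Aexp[OF s uu uu] fexp[OF s uu] by (simp add: U_def)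
  qed
  have T4: "energy (pV (t + s)) (A (t + s)) f (u (t + s)) \<le> 1/2 * (a0 v v + s * a1 v v + a2 s v v)
      - (F0 v + s * F1 v + F2 s v) - (b0 (Lm s) v + s * b1 (Lm s) v + b2 s (Lm s) v)"
    if s: "s \<in> I" and v: "v \<in> V t" for s v
  proof -
    obtain w where w: "w \<in> V (t + s)" "v = w \<circ> \<phi> s" using pV_ex[OF s v] by blast
    have ll: "lam (t + s) \<in> Hs (t + s)" using SF2[OF tau[OF s]] by auto
    have "energy (pV (t + s)) (A (t + s)) f (u (t + s)) \<le> 1/2 * pV (t + s) (A (t + s) w) w - pV (t + s) f w
       - pH (t + s) (lam (t + s)) (B (t + s) w)" using SF5[OF tau[OF s]] w(1) by blast
    then show ?thesis using Aexp[OF s w(1) w(1)] fexp[OF s w(1)] Bexp[OF s ll w(1)] w(2)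
      by (simp add: Lm_def)
  qed
  have hV: "hsp (V t) (ipV t)" using spV[OF t_in] by (simp add: hsp_def)
  have hH: "hsp (H t) (ipH t)" using spH[OF t_in] by (simp add: hsp_def)
  define nV where "nV v = fnorm (ipV t) v" for v
  define nH where "nH \<mu> = dual_norm (H t) (ipH t) (pH t) \<mu>" for \<mu>
  have nV0: "nV v \<ge> 0" if "v \<in> V t" for v using Vt.fn_nonneg[OF that] by (simp add: nV_def)
  have nH0: "nH \<mu> \<ge> 0" if "\<mu> \<in> Hs t" for \<mu> using Ht.dn_nonneg[OF that] by (simp add: nH_def)
  have uT: "u t \<in> V t" by (rule SF1[OF t_in])
  have lT: "lam t \<in> Hs t" by (rule SF2[OF t_in])
  have C0: "b0 \<mu> (u t) = 0" if "\<mu> \<in> Hs t" for \<mu> using SF3[OF t_in] that by (simp add: b0_def)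
  have E0: "1/2 * (a0 (u t) z + a0 z (u t)) - F0 z - b0 (lam t) z = 0" if "z \<in> V t" for z
    using SF4[OF t_in] that by (simp add: a0_def F0_def b0_def)
  have S0: "energy (pV t) (A t) f (u t) \<le> 1/2 * a0 w w - F0 w - b0 (lam t) w" if "w \<in> V t" for w
    using SF5[OF t_in] that by (simp add: a0_def F0_def b0_def)
  have En0: "energy (pV t) (A t) f (u t) = 1/2 * a0 (u t) (u t) - F0 (u t)"
    using SF6[OF t_in] by (simp add: a0_def F0_def)
  obtain CA0 where CA0: "\<forall>w\<in>V t. dual_norm (V t) (ipV t) (pV t) (A1 w) \<le> CA0 * fnorm (ipV t) w"
    using A1_bdd(2) by blast
  define CA where "CA = \<bar>CA0\<bar>"
  have CA: "CA \<ge> 0" by (simp add: CA_def)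
  have dA1: "dual_norm (V t) (ipV t) (pV t) (A1 w) \<le> CA * nV w" if "w \<in> V t" for w
  proof -
    have "CA0 * nV w \<le> CA * nV w" using nV0[OF that] by (simp add: CA_def mult_right_mono)
    then show ?thesis using CA0 that by (auto simp: nV_def)
  qed
  obtain CB0 where CB0: "\<forall>w\<in>V t. fnorm (ipH t) (B1 w) \<le> CB0 * fnorm (ipV t) w"
    using B1_bdd(2) by blast
  define CB where "CB = \<bar>CB0\<bar>"
  have CB: "CB \<ge> 0" by (simp add: CB_def)
  have dB1: "fnorm (ipH t) (B1 w) \<le> CB * nV w" if "w \<in> V t" for w
  proof -
    have "CB0 * nV w \<le> CB * nV w" using nV0[OF that] by (simp add: CB_def mult_right_mono)
    then show ?thesis using CB0 that by (auto simp: nV_def)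
  qed
  have sI: "s \<in> {t0 - t<..<t1 - t}" if "s \<in> I" for s using that by (simp add: I_def)
  have ba0: "\<bar>a0 v z\<bar> \<le> cAhi * nV v * nV z" if "v \<in> V t" "z \<in> V t" for v z
  proof -
    have "\<bar>a0 v z\<bar> \<le> dual_norm (V t) (ipV t) (pV t) (A t v) * nV z"
      unfolding a0_def nV_def by (rule Vt.dn_bound[OF A_in[OF that(1)] that(2)])
    also have "\<dots> \<le> cAhi * nV v * nV z"
      using A_bdd[OF t_in that(1)] nV0[OF that(2)] by (simp add: nV_def mult_right_mono)
    finally show ?thesis .
  qed
  have ba1: "\<bar>a1 v z\<bar> \<le> CA * nV v * nV z" if "v \<in> V t" "z \<in> V t" for v z
  proof -
    have "\<bar>a1 v z\<bar> \<le> dual_norm (V t) (ipV t) (pV t) (A1 v) * nV z"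
      unfolding a1_def nV_def by (rule Vt.dn_bound[OF A1_in[OF that(1)] that(2)])
    also have "\<dots> \<le> CA * nV v * nV z"
      using dA1[OF that(1)] nV0[OF that(2)] by (simp add: mult_right_mono)
    finally show ?thesis .
  qed
  have ba2: "\<bar>a2 s v z\<bar> \<le> oA s * nV v * nV z" if "s \<in> I" "v \<in> V t" "z \<in> V t" for s v z
  proof -
    have "\<bar>a2 s v z\<bar> \<le> dual_norm (V t) (ipV t) (pV t) (A2 s v) * nV z"
      unfolding a2_def nV_def by (rule Vt.dn_bound[OF A2_in[OF that(1,2)] that(3)])
    also have "\<dots> \<le> oA s * nV v * nV z"
      using A2_small(2)[OF sI[OF that(1)] that(2)] nV0[OF that(3)] by (simp add: nV_def mult_right_mono)
    finally show ?thesis .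
  qed
  define nf where "nf = dual_norm (V t) (ipV t) (pV t) f"
  define nf1 where "nf1 = dual_norm (V t) (ipV t) (pV t) f1"
  have nf: "nf \<ge> 0" using Vt.dn_nonneg[OF ft] by (simp add: nf_def)
  have nf1: "nf1 \<ge> 0" using Vt.dn_nonneg[OF f1_in] by (simp add: nf1_def)
  have bF0: "\<bar>F0 z\<bar> \<le> nf * nV z" if "z \<in> V t" for z
    unfolding F0_def nf_def nV_def by (rule Vt.dn_bound[OF ft that])
  have bF1: "\<bar>F1 z\<bar> \<le> nf1 * nV z" if "z \<in> V t" for z
    unfolding F1_def nf1_def nV_def by (rule Vt.dn_bound[OF f1_in that])
  have bF2: "\<bar>F2 s z\<bar> \<le> oF s * nV z" if "s \<in> I" "z \<in> V t" for s z
  proof -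
    have "\<bar>F2 s z\<bar> \<le> dual_norm (V t) (ipV t) (pV t) (f2 s) * nV z"
      unfolding F2_def nV_def by (rule Vt.dn_bound[OF f2_in'[OF that(1)] that(2)])
    also have "\<dots> \<le> oF s * nV z"
      using f2_small(2)[OF sI[OF that(1)]] nV0[OF that(2)] by (simp add: mult_right_mono)
    finally show ?thesis .
  qed
  have bb0: "\<bar>b0 \<mu> v\<bar> \<le> nH \<mu> * cB * nV v" if "\<mu> \<in> Hs t" "v \<in> V t" for \<mu> v
  proof -
    have "\<bar>b0 \<mu> v\<bar> \<le> nH \<mu> * fnorm (ipH t) (B t v)"
      unfolding b0_def nH_def by (rule Ht.dn_bound[OF that(1) B_in[OF that(2)]])
    also have "\<dots> \<le> nH \<mu> * (cB * nV v)"
      using B_bdd[OF t_in that(2)] nH0[OF that(1)] by (simp add: nV_def mult_left_mono)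
    finally show ?thesis by (simp add: mult.assoc)
  qed
  have bb1: "\<bar>b1 \<mu> v\<bar> \<le> nH \<mu> * CB * nV v" if "\<mu> \<in> Hs t" "v \<in> V t" for \<mu> v
  proof -
    have "\<bar>b1 \<mu> v\<bar> \<le> nH \<mu> * fnorm (ipH t) (B1 v)"
      unfolding b1_def nH_def by (rule Ht.dn_bound[OF that(1) B1_in[OF that(2)]])
    also have "\<dots> \<le> nH \<mu> * (CB * nV v)"
      using dB1[OF that(2)] nH0[OF that(1)] by (simp add: mult_left_mono)
    finally show ?thesis by (simp add: mult.assoc)
  qed
  have bb2: "\<bar>b2 s \<mu> v\<bar> \<le> nH \<mu> * oB s * nV v" if "s \<in> I" "\<mu> \<in> Hs t" "v \<in> V t" for s \<mu> v
  proof -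
    have "\<bar>b2 s \<mu> v\<bar> \<le> nH \<mu> * fnorm (ipH t) (B2 s v)"
      unfolding b2_def nH_def by (rule Ht.dn_bound[OF that(2) B2_in[OF that(1,3)]])
    also have "\<dots> \<le> nH \<mu> * (oB s * nV v)"
      using B2_small(2)[OF sI[OF that(1)] that(3)] nH0[OF that(2)] by (simp add: nV_def mult_left_mono)
    finally show ?thesis by (simp add: mult.assoc)
  qed
  obtain c where c: "c > 0" and IS0: "\<forall>\<nu>\<in>Hs t. \<forall>M>0. (\<forall>w\<in>V t. \<bar>pH t \<nu> (B t w)\<bar> \<le> M * nV w)
            \<longrightarrow> (\<forall>h\<in>H t. \<bar>pH t \<nu> h\<bar> \<le> c * M * fnorm (ipH t) h)"
    using infsup[OF dH[OF t_in] conjunct2[OF B_lin[OF t_in]], of nV] by blast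
  have IS: "nH \<nu> \<le> c * M" if nu: "\<nu> \<in> Hs t" and M: "M > 0" and b: "\<And>z. z \<in> V t \<Longrightarrow> \<bar>b0 \<nu> z\<bar> \<le> M * nV z" for \<nu> M
  proof -
    have "\<forall>h\<in>H t. \<bar>pH t \<nu> h\<bar> \<le> c * M * fnorm (ipH t) h" using IS0 nu M b by (simp add: b0_def)
    then show ?thesis unfolding nH_def using c M by (intro Ht.dn_le) auto
  qed
  have a0_dL: "a0 (\<lambda>x. v x - w x) z = a0 v z - a0 w z" if "v \<in> V t" "w \<in> V t" "z \<in> V t" for v w z
    unfolding a0_def lin_diff[OF hV A_lin[OF t_in] that(1,2)] by (rule Vt.gdiffL[OF A_in A_in that(3)]) (use that in auto)
  have a0_dR: "a0 z (\<lambda>x. v x - w x) = a0 z v - a0 z w" if "v \<in> V t" "w \<in> V t" "z \<in> V t" for v w z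
    unfolding a0_def by (rule Vt.pdiffR[OF A_in[OF that(3)] that(1,2)])
  have a1_dL: "a1 (\<lambda>x. v x - w x) z = a1 v z - a1 w z" if "v \<in> V t" "w \<in> V t" "z \<in> V t" for v w z
    unfolding a1_def lin_diff[OF hV A1_bdd(1) that(1,2)] by (rule Vt.gdiffL[OF A1_in A1_in that(3)]) (use that in auto)
  have a1_dR: "a1 z (\<lambda>x. v x - w x) = a1 z v - a1 z w" if "v \<in> V t" "w \<in> V t" "z \<in> V t" for v w z
    unfolding a1_def by (rule Vt.pdiffR[OF A1_in[OF that(3)] that(1,2)])
  have F1_d: "F1 (\<lambda>x. v x - w x) = F1 v - F1 w" if "v \<in> V t" "w \<in> V t" for v w
    unfolding F1_def by (rule Vt.pdiffR[OF f1_in that(1,2)])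
  have b1_dR: "b1 \<mu> (\<lambda>x. v x - w x) = b1 \<mu> v - b1 \<mu> w" if "\<mu> \<in> Hs t" "v \<in> V t" "w \<in> V t" for \<mu> v w
    unfolding b1_def lin_diff[OF hV B1_bdd(1) that(2,3)] by (rule Ht.pdiffR[OF that(1) B1_in B1_in]) (use that in auto)
  have b0_dL: "b0 (\<lambda>x. \<mu> x - \<nu> x) z = b0 \<mu> z - b0 \<nu> z" if "\<mu> \<in> Hs t" "\<nu> \<in> Hs t" "z \<in> V t" for \<mu> \<nu> z
    unfolding b0_def by (rule Ht.gdiffL[OF that(1,2) B_in[OF that(3)]])
  have b1_dL: "b1 (\<lambda>x. \<mu> x - \<nu> x) z = b1 \<mu> z - b1 \<nu> z" if "\<mu> \<in> Hs t" "\<nu> \<in> Hs t" "z \<in> V t" for \<mu> \<nu> z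
    unfolding b1_def by (rule Ht.gdiffL[OF that(1,2) B1_in[OF that(3)]])
  have coer: "a0 v v \<ge> cAlo * (nV v)\<^sup>2" if "v \<in> V t" for v
    using A_coer[OF t_in that] by (simp add: a0_def nV_def)
  have cAhi0: "cAhi \<ge> 0" using cA by simp
  have oA0: "oA s \<ge> 0" for s using small_o_nonneg[OF A2_small(1)] .
  have oB0: "oB s \<ge> 0" for s using small_o_nonneg[OF B2_small(1)] .
  have oF0: "oF s \<ge> 0" for s using small_o_nonneg[OF f2_small(1)] .
  define KF where "KF = nf + nf1 + 1"
  have KF: "KF > 0" using nf nf1 by (simp add: KF_def)
  define KU where "KU = 2 * KF / cAlo"
  have KU: "KU \<ge> 0" using KF cA by (simp add: KU_def)
  define K1 where "K1 = (cAhi + CA + 1) * KU + KF + 1"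
  have "(cAhi + CA + 1) * KU \<ge> 0" using KU cAhi0 CA by simp
  then have K1: "K1 > 0" using KF by (simp add: K1_def)
  define KL where "KL = 2 * c * K1"
  have KL: "KL \<ge> 0" using c K1 by (simp add: KL_def)
  define Ku where "Ku = nV (u t)"
  have Ku: "Ku \<ge> 0" using nV0[OF uT] by (simp add: Ku_def)
  define Kl where "Kl = nH (lam t)"
  have Kl: "Kl \<ge> 0" using nH0[OF lT] by (simp add: Kl_def)
  define Kb where "Kb = 1 + KU + Ku + KL + Kl + nf1 + CA + CB + cAhi"
  have Kb1: "1 \<le> Kb" and KbU: "KU \<le> Kb" and Kbu: "Ku \<le> Kb" and KbL: "KL \<le> Kb" and Kbl: "Kl \<le> Kb"
    and Kbf: "nf1 \<le> Kb" and KbA: "CA \<le> Kb" and KbB: "CB \<le> Kb" and Kbh: "cAhi \<le> Kb"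
    using KU Ku KL Kl nf1 CA CB cAhi0 by (simp_all add: Kb_def)
  have Kb0: "Kb \<ge> 0" using Kb1 by simp
  define g where "g s = \<bar>s\<bar> + oA s + oF s + oB s" for s
  have gs_ge: "\<bar>s\<bar> \<le> g s" "oA s \<le> g s" "oF s \<le> g s" "oB s \<le> g s" for s
    using oA0[of s] oB0[of s] oF0[of s] by (simp_all add: g_def)
  define good where "good s \<longleftrightarrow> s \<in> I \<and> s \<noteq> 0 \<and> \<bar>s\<bar> \<le> 1 \<and> \<bar>s\<bar> * CA \<le> cAlo / 4 \<and> oA s \<le> cAlo / 4
       \<and> oA s \<le> 1 \<and> oF s \<le> 1 \<and> oB s \<le> 1 \<and> c * (\<bar>s\<bar> * CB) \<le> 1/4 \<and> c * oB s \<le> 1/4" for s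
  define X where "X s = 1/2 * a1 (U s) (U s) - F1 (U s) - b1 (lam t) (U s)" for s
  define Y where "Y s = 1/2 * a1 (u t) (u t) - F1 (u t) - b1 (Lm s) (u t)" for s
  define r1 where "r1 s = 1/2 * a2 s (u t) (u t) - F2 s (u t) - b2 s (Lm s) (u t)" for s
  define r2 where "r2 s = 1/2 * a2 s (U s) (U s) - F2 s (U s) - b2 s (lam t) (U s)" for s
  define D where "D s = energy (pV (t + s)) (A (t + s)) f (u (t + s)) - energy (pV t) (A t) f (u t)" for s
  define T where "T = 1/2 * a1 (u t) (u t) - F1 (u t) - b1 (lam t) (u t)"
  define Kq where "Kq = 12 * Kb * Kb * Kb / cAlo"
  have Kq: "Kq \<ge> 0" using Kb0 cA by (simp add: Kq_def)
  define \<Phi> where "\<Phi> s = 3 * Kb * Kb * sqrt (Kq * g s) + Kb * Kb * (c * (Kb * sqrt (Kq * g s) + 7 * Kb * Kb * g s))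
      + 2 * Kb * Kb * (oA s / \<bar>s\<bar> + oF s / \<bar>s\<bar> + oB s / \<bar>s\<bar>)" for s
  have main: "s * X s + r2 s \<le> D s \<and> D s \<le> s * Y s + r1 s
      \<and> \<bar>X s - T\<bar> + \<bar>Y s - T\<bar> + \<bar>r1 s\<bar> / \<bar>s\<bar> + \<bar>r2 s\<bar> / \<bar>s\<bar> \<le> \<Phi> s" if gs: "good s" for s
  proof -
    have s: "s \<in> I" and s0: "s \<noteq> 0" and s1: "\<bar>s\<bar> \<le> 1" and sCA: "\<bar>s\<bar> * CA \<le> cAlo / 4"
      and oAs: "oA s \<le> cAlo / 4" and oA1: "oA s \<le> 1" and oF1: "oF s \<le> 1" and oB1: "oB s \<le> 1"
      and cB1: "c * (\<bar>s\<bar> * CB) \<le> 1/4" and cB2: "c * oB s \<le> 1/4"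
      using gs by (simp_all add: good_def)
    have as0: "\<bar>s\<bar> \<ge> 0" by simp
    let ?U = "U s" and ?L = "Lm s" and ?u = "u t" and ?l = "lam t"
    have UV: "?U \<in> V t" by (rule U_in[OF s])
    have LH: "?L \<in> Hs t" by (rule Lm_in[OF s])
    define n where "n = nV ?U"
    have n0: "n \<ge> 0" using nV0[OF UV] by (simp add: n_def)
    have nKU: "n \<le> KU"
    proof -
      have eq: "a0 ?U ?U + s * a1 ?U ?U + a2 s ?U ?U = F0 ?U + s * F1 ?U + F2 s ?U"
        using T2[OF s UV] T1[OF s LH] by ((simp only: ring_distribs)?; linarith)
      have c1: "a0 ?U ?U \<ge> cAlo * n\<^sup>2" using coer[OF UV] by (simp add: n_def)
      have c2: "\<bar>s * a1 ?U ?U\<bar> \<le> cAlo / 4 * n\<^sup>2"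
      proof -
        have "\<bar>s * a1 ?U ?U\<bar> \<le> \<bar>s\<bar> * (CA * n * n)" using abs_mult_le[OF ba1[OF UV UV]] by (simp add: n_def)
        also have "\<dots> = (\<bar>s\<bar> * CA) * n\<^sup>2" by (simp add: power2_eq_square algebra_simps)
        also have "\<dots> \<le> cAlo / 4 * n\<^sup>2" using sCA by (intro mult_right_mono) auto
        finally show ?thesis .
      qed
      have c3: "\<bar>a2 s ?U ?U\<bar> \<le> cAlo / 4 * n\<^sup>2"
      proof -
        have "\<bar>a2 s ?U ?U\<bar> \<le> oA s * n * n" using ba2[OF s UV UV] by (simp add: n_def)
        also have "\<dots> = oA s * n\<^sup>2" by (simp add: power2_eq_square)
        also have "\<dots> \<le> cAlo / 4 * n\<^sup>2" using oAs by (intro mult_right_mono) auto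
        finally show ?thesis .
      qed
      have f1: "\<bar>F0 ?U\<bar> \<le> nf * n" using bF0[OF UV] by (simp add: n_def)
      have f2: "\<bar>s * F1 ?U\<bar> \<le> nf1 * n"
      proof -
        have "\<bar>s * F1 ?U\<bar> \<le> \<bar>s\<bar> * (nf1 * n)" using abs_mult_le[OF bF1[OF UV]] by (simp add: n_def)
        also have "\<dots> \<le> nf1 * n" using s1 nf1 n0 by (intro mult_left_le_one_le) auto
        finally show ?thesis .
      qed
      have f3: "\<bar>F2 s ?U\<bar> \<le> n"
      proof -
        have "\<bar>F2 s ?U\<bar> \<le> oF s * n" using bF2[OF s UV] by (simp add: n_def)
        also have "\<dots> \<le> n" using oF1 oF0[of s] n0 by (intro mult_left_le_one_le) auto
        finally show ?thesis .
      qed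
      have "cAlo / 2 * n\<^sup>2 \<le> KF * n" using eq c1 c2[THEN abs_le_D1] c2[THEN abs_le_D2] c3[THEN abs_le_D1] c3[THEN abs_le_D2] f1[THEN abs_le_D1] f1[THEN abs_le_D2] f2[THEN abs_le_D1] f2[THEN abs_le_D2] f3[THEN abs_le_D1] f3[THEN abs_le_D2] unfolding KF_def by ((simp only: ring_distribs)?; linarith)
      then have "cAlo / 2 * n * n \<le> KF * n" by (simp add: power2_eq_square algebra_simps)
      show "n \<le> KU"
      proof (cases "n = 0")
        case True then show ?thesis using KU by simp
      next
        case False
        then have "n > 0" using n0 by simp
        with \<open>cAlo / 2 * n * n \<le> KF * n\<close> have "cAlo / 2 * n \<le> KF" by simp
        then show ?thesis using cA by (simp add: KU_def field_simps)
      qed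
    qed
    have nKb: "n \<le> Kb" using nKU KbU by simp
    define nl where "nl = nH ?L"
    have nl0: "nl \<ge> 0" using nH0[OF LH] by (simp add: nl_def)
    have nlKL: "nl \<le> KL"
    proof -
      define M where "M = K1 + (\<bar>s\<bar> * CB + oB s) * nl"
      have M: "M > 0" using K1 nl0 CB oB0[of s] by (simp add: M_def add_pos_nonneg)
      have bz: "\<bar>b0 ?L z\<bar> \<le> M * nV z" if z: "z \<in> V t" for z
      proof -
        define nz where "nz = nV z"
        have nz0: "nz \<ge> 0" using nV0[OF z] by (simp add: nz_def)
        have eq: "b0 ?L z + s * b1 ?L z + b2 s ?L z = 1/2 * ((a0 ?U z + s * a1 ?U z + a2 s ?U z) + (a0 z ?U + s * a1 z ?U + a2 s z ?U))
            - (F0 z + s * F1 z + F2 s z)" using T2[OF s z] by ((simp only: ring_distribs)?; linarith)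
        have P1: "\<bar>a0 ?U z\<bar> \<le> cAhi * KU * nz"
          using order_trans[OF ba0[OF UV z, folded n_def nz_def] mono3[OF cAhi0 order_refl n0 nKU nz0 order_refl]] .
        have P4: "\<bar>a0 z ?U\<bar> \<le> cAhi * KU * nz"
          using order_trans[OF ba0[OF z UV, folded n_def nz_def] mono3[OF cAhi0 order_refl nz0 order_refl n0 nKU]] by (simp add: algebra_simps)
        have P2: "\<bar>s * a1 ?U z\<bar> \<le> CA * KU * nz"
        proof -
          have "\<bar>s * a1 ?U z\<bar> \<le> \<bar>s\<bar> * CA * n * nz" using abs_mult_le[OF ba1[OF UV z]] by (simp add: n_def nz_def mult.assoc)
          also have "\<dots> \<le> 1 * CA * KU * nz" by (rule mono4[OF as0 s1 CA order_refl n0 nKU nz0 order_refl])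
          finally show ?thesis by simp
        qed
        have P5: "\<bar>s * a1 z ?U\<bar> \<le> CA * KU * nz"
        proof -
          have "\<bar>s * a1 z ?U\<bar> \<le> \<bar>s\<bar> * CA * n * nz" using abs_mult_le[OF ba1[OF z UV]] by (simp add: n_def nz_def algebra_simps)
          also have "\<dots> \<le> 1 * CA * KU * nz" by (rule mono4[OF as0 s1 CA order_refl n0 nKU nz0 order_refl])
          finally show ?thesis by simp
        qed
        have P3: "\<bar>a2 s ?U z\<bar> \<le> KU * nz"
        proof -
          have "\<bar>a2 s ?U z\<bar> \<le> oA s * n * nz" using ba2[OF s UV z] by (simp add: n_def nz_def)
          also have "\<dots> \<le> 1 * KU * nz" by (rule mono3[OF oA0 oA1 n0 nKU nz0 order_refl])
          finally show ?thesis by simp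
        qed
        have P6: "\<bar>a2 s z ?U\<bar> \<le> KU * nz"
        proof -
          have "\<bar>a2 s z ?U\<bar> \<le> oA s * n * nz" using ba2[OF s z UV] by (simp add: n_def nz_def algebra_simps)
          also have "\<dots> \<le> 1 * KU * nz" by (rule mono3[OF oA0 oA1 n0 nKU nz0 order_refl])
          finally show ?thesis by simp
        qed
        have P7: "\<bar>F0 z\<bar> \<le> nf * nz" using bF0[OF z] by (simp add: nz_def)
        have P8: "\<bar>s * F1 z\<bar> \<le> nf1 * nz"
        proof -
          have "\<bar>s * F1 z\<bar> \<le> \<bar>s\<bar> * (nf1 * nz)" using abs_mult_le[OF bF1[OF z]] by (simp add: nz_def)
          also have "\<dots> \<le> nf1 * nz" using s1 nf1 nz0 by (intro mult_left_le_one_le) auto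
          finally show ?thesis .
        qed
        have P9: "\<bar>F2 s z\<bar> \<le> nz"
        proof -
          have "\<bar>F2 s z\<bar> \<le> oF s * nz" using bF2[OF s z] by (simp add: nz_def)
          also have "\<dots> \<le> nz" using oF1 oF0[of s] nz0 by (intro mult_left_le_one_le) auto
          finally show ?thesis .
        qed
        have P10: "\<bar>s * b1 ?L z\<bar> \<le> \<bar>s\<bar> * CB * nl * nz"
          using abs_mult_le[OF bb1[OF LH z]] by (simp add: nl_def nz_def algebra_simps)
        have P11: "\<bar>b2 s ?L z\<bar> \<le> oB s * nl * nz"
          using bb2[OF s LH z] by (simp add: nl_def nz_def algebra_simps)
        have Mexp: "M * nz = cAhi * KU * nz + CA * KU * nz + KU * nz + nf * nz + nf1 * nz + nz + nz
            + \<bar>s\<bar> * CB * nl * nz + oB s * nl * nz"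
          by (simp add: M_def K1_def KF_def algebra_simps)
        have "\<bar>b0 ?L z\<bar> \<le> M * nz"
          unfolding Mexp using eq P1[THEN abs_le_D1] P1[THEN abs_le_D2] P2[THEN abs_le_D1] P2[THEN abs_le_D2] P3[THEN abs_le_D1] P3[THEN abs_le_D2] P4[THEN abs_le_D1] P4[THEN abs_le_D2] P5[THEN abs_le_D1] P5[THEN abs_le_D2] P6[THEN abs_le_D1] P6[THEN abs_le_D2] P7[THEN abs_le_D1] P7[THEN abs_le_D2] P8[THEN abs_le_D1] P8[THEN abs_le_D2] P9[THEN abs_le_D1] P9[THEN abs_le_D2] P10[THEN abs_le_D1] P10[THEN abs_le_D2] P11[THEN abs_le_D1] P11[THEN abs_le_D2] nz0 by (intro abs_leI; (simp only: ring_distribs)?; linarith)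
        then show ?thesis by (simp add: nz_def)
      qed
      have "nl \<le> c * M" unfolding nl_def by (rule IS[OF LH M bz])
      also have "c * M = c * K1 + (c * (\<bar>s\<bar> * CB)) * nl + (c * oB s) * nl" by (simp add: M_def algebra_simps)
      finally have "nl \<le> c * K1 + (c * (\<bar>s\<bar> * CB)) * nl + (c * oB s) * nl" .
      moreover have "(c * (\<bar>s\<bar> * CB)) * nl \<le> 1/4 * nl" using cB1 nl0 by (rule mult_right_mono)
      moreover have "(c * oB s) * nl \<le> 1/4 * nl" using cB2 nl0 by (rule mult_right_mono)
      ultimately show ?thesis by (simp add: KL_def)
    qed
    have nlKb: "nl \<le> Kb" using nlKL KbL by simp
    have Ku': "nV ?u = Ku" by (simp add: Ku_def)
    have Kl': "nH ?l = Kl" by (simp add: Kl_def)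
    have g_pos: "g s > 0" using s0 oA0[of s] oB0[of s] oF0[of s] by (simp add: g_def add_pos_nonneg)
    have M4: "\<bar>x\<bar> \<le> Kb * Kb * Kb * g s" if "\<bar>x\<bar> \<le> a1' * b' * c' * d'" "0 \<le> a1'" "a1' \<le> g s" "0 \<le> b'" "b' \<le> Kb"
        "0 \<le> c'" "c' \<le> Kb" "0 \<le> d'" "d' \<le> Kb" for x a1' b' c' d'
    proof -
      have "a1' * b' * c' * d' \<le> g s * Kb * Kb * Kb" by (rule mono4) (use that in auto)
      then show ?thesis using that(1) by (simp add: algebra_simps)
    qed
    define e where "e = (\<lambda>x. U s x - u t x)"
    have eV: "e \<in> V t" unfolding e_def by (rule Vt.diff[OF UV uT])
    define ne where "ne = nV e"
    have ne0: "ne \<ge> 0" using nV0[OF eV] by (simp add: ne_def)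
    have ne_sq: "ne \<le> sqrt (Kq * g s)"
    proof -
      have ee1: "a0 e e = a0 ?U e - a0 ?u e" unfolding e_def by (rule a0_dL[OF UV uT eV[unfolded e_def]])
      have ee2: "a0 ?U e = a0 ?U ?U - a0 ?U ?u" unfolding e_def by (rule a0_dR[OF UV uT UV])
      have ee3: "a0 ?u e = a0 ?u ?U - a0 ?u ?u" unfolding e_def by (rule a0_dR[OF UV uT uT])
      have R: "a0 e e = s * F1 ?U + F2 s ?U - s * a1 ?U ?U - a2 s ?U ?U + 1/2 * (s * a1 ?U ?u + s * a1 ?u ?U)
          + 1/2 * (a2 s ?U ?u + a2 s ?u ?U) - s * F1 ?u - F2 s ?u - s * b1 ?L ?u - b2 s ?L ?u + s * b1 ?l ?U + b2 s ?l ?U"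
        using ee1 ee2 ee3 T2[OF s UV] T1[OF s LH] T2[OF s uT] E0[OF UV] E0[OF uT] T1[OF s lT] C0[OF LH] C0[OF lT]
        by ((simp only: ring_distribs)?; linarith)
      have R1: "\<bar>s * F1 ?U\<bar> \<le> Kb * Kb * Kb * g s"
        by (rule M4[of _ "\<bar>s\<bar>" nf1 n 1]) (use abs_mult_le[OF bF1[OF UV, folded n_def]] gs_ge nf1 Kbf n0 nKb Kb1 in \<open>auto simp: mult.assoc\<close>)
      have R2: "\<bar>F2 s ?U\<bar> \<le> Kb * Kb * Kb * g s"
        by (rule M4[of _ "oF s" n 1 1]) (use bF2[OF s UV, folded n_def] gs_ge oF0 n0 nKb Kb1 in auto)
      have R3: "\<bar>s * a1 ?U ?U\<bar> \<le> Kb * Kb * Kb * g s"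
        by (rule M4[of _ "\<bar>s\<bar>" CA n n]) (use abs_mult_le[OF ba1[OF UV UV, folded n_def]] gs_ge CA KbA n0 nKb in \<open>auto simp: mult.assoc\<close>)
      have R4: "\<bar>a2 s ?U ?U\<bar> \<le> Kb * Kb * Kb * g s"
        by (rule M4[of _ "oA s" n n 1]) (use ba2[OF s UV UV, folded n_def] gs_ge oA0 n0 nKb Kb1 in auto)
      have R5: "\<bar>s * a1 ?U ?u\<bar> \<le> Kb * Kb * Kb * g s"
        by (rule M4[of _ "\<bar>s\<bar>" CA n Ku]) (use abs_mult_le[OF ba1[OF UV uT, folded n_def, unfolded Ku']] gs_ge CA KbA n0 nKb Ku Kbu in \<open>auto simp: mult.assoc\<close>)
      have R6: "\<bar>s * a1 ?u ?U\<bar> \<le> Kb * Kb * Kb * g s"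
        by (rule M4[of _ "\<bar>s\<bar>" CA Ku n]) (use abs_mult_le[OF ba1[OF uT UV, folded n_def, unfolded Ku']] gs_ge CA KbA n0 nKb Ku Kbu in \<open>auto simp: mult.assoc\<close>)
      have R7: "\<bar>a2 s ?U ?u\<bar> \<le> Kb * Kb * Kb * g s"
        by (rule M4[of _ "oA s" n Ku 1]) (use ba2[OF s UV uT, folded n_def, unfolded Ku'] gs_ge oA0 n0 nKb Ku Kbu Kb1 in auto)
      have R8: "\<bar>a2 s ?u ?U\<bar> \<le> Kb * Kb * Kb * g s"
        by (rule M4[of _ "oA s" Ku n 1]) (use ba2[OF s uT UV, folded n_def, unfolded Ku'] gs_ge oA0 n0 nKb Ku Kbu Kb1 in auto)
      have R9: "\<bar>s * F1 ?u\<bar> \<le> Kb * Kb * Kb * g s"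
        by (rule M4[of _ "\<bar>s\<bar>" nf1 Ku 1]) (use abs_mult_le[OF bF1[OF uT, unfolded Ku']] gs_ge nf1 Kbf Ku Kbu Kb1 in \<open>auto simp: mult.assoc\<close>)
      have R10: "\<bar>F2 s ?u\<bar> \<le> Kb * Kb * Kb * g s"
        by (rule M4[of _ "oF s" Ku 1 1]) (use bF2[OF s uT, unfolded Ku'] gs_ge oF0 Ku Kbu Kb1 in auto)
      have R11: "\<bar>s * b1 ?L ?u\<bar> \<le> Kb * Kb * Kb * g s"
        by (rule M4[of _ "\<bar>s\<bar>" nl CB Ku]) (use abs_mult_le[OF bb1[OF LH uT, folded nl_def, unfolded Ku']] gs_ge nl0 nlKb CB KbB Ku Kbu in \<open>auto simp: mult.assoc\<close>)
      have R12: "\<bar>b2 s ?L ?u\<bar> \<le> Kb * Kb * Kb * g s"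
        by (rule M4[of _ "oB s" nl Ku 1]) (use bb2[OF s LH uT, folded nl_def, unfolded Ku'] gs_ge oB0 nl0 nlKb Ku Kbu Kb1 in \<open>auto simp: algebra_simps\<close>)
      have R13: "\<bar>s * b1 ?l ?U\<bar> \<le> Kb * Kb * Kb * g s"
        by (rule M4[of _ "\<bar>s\<bar>" Kl CB n]) (use abs_mult_le[OF bb1[OF lT UV, folded n_def, unfolded Kl']] gs_ge Kl Kbl CB KbB n0 nKb in \<open>auto simp: mult.assoc\<close>)
      have R14: "\<bar>b2 s ?l ?U\<bar> \<le> Kb * Kb * Kb * g s"
        by (rule M4[of _ "oB s" Kl n 1]) (use bb2[OF s lT UV, folded n_def, unfolded Kl'] gs_ge oB0 Kl Kbl n0 nKb Kb1 in \<open>auto simp: algebra_simps\<close>)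
      have "cAlo * ne\<^sup>2 \<le> a0 e e" using coer[OF eV] by (simp add: ne_def)
      also have "a0 e e \<le> 12 * (Kb * Kb * Kb * g s)"
        unfolding R using R1[THEN abs_le_D1] R1[THEN abs_le_D2] R2[THEN abs_le_D1] R2[THEN abs_le_D2] R3[THEN abs_le_D1] R3[THEN abs_le_D2] R4[THEN abs_le_D1] R4[THEN abs_le_D2] R5[THEN abs_le_D1] R5[THEN abs_le_D2] R6[THEN abs_le_D1] R6[THEN abs_le_D2] R7[THEN abs_le_D1] R7[THEN abs_le_D2] R8[THEN abs_le_D1] R8[THEN abs_le_D2] R9[THEN abs_le_D1] R9[THEN abs_le_D2] R10[THEN abs_le_D1] R10[THEN abs_le_D2] R11[THEN abs_le_D1] R11[THEN abs_le_D2] R12[THEN abs_le_D1] R12[THEN abs_le_D2] R13[THEN abs_le_D1] R13[THEN abs_le_D2] R14[THEN abs_le_D1] R14[THEN abs_le_D2]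
        by ((simp only: ring_distribs)?; linarith)
      finally have "cAlo * ne\<^sup>2 \<le> 12 * (Kb * Kb * Kb * g s)" .
      then have "ne\<^sup>2 \<le> Kq * g s" using cA by (simp add: Kq_def field_simps)
      then show ?thesis by (rule real_le_rsqrt)
    qed
    have sq0: "sqrt (Kq * g s) \<ge> 0" using Kq g_pos by simp
    have M3: "\<bar>x\<bar> \<le> Kb * Kb * w" if "\<bar>x\<bar> \<le> a' * b' * w" "0 \<le> a'" "a' \<le> Kb" "0 \<le> b'" "b' \<le> Kb" "0 \<le> w" for x a' b' w
    proof -
      have "a' * b' * w \<le> Kb * Kb * w" by (rule mono3) (use that in auto)
      then show ?thesis using that(1) by simp
    qed
    have XT: "\<bar>X s - T\<bar> \<le> 3 * Kb * Kb * ne"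
    proof -
      have x1: "a1 e ?U = a1 ?U ?U - a1 ?u ?U" unfolding e_def by (rule a1_dL[OF UV uT UV])
      have x2: "a1 ?u e = a1 ?u ?U - a1 ?u ?u" unfolding e_def by (rule a1_dR[OF UV uT uT])
      have x3: "F1 e = F1 ?U - F1 ?u" unfolding e_def by (rule F1_d[OF UV uT])
      have x4: "b1 ?l e = b1 ?l ?U - b1 ?l ?u" unfolding e_def by (rule b1_dR[OF lT UV uT])
      have XTe: "X s - T = 1/2 * (a1 e ?U + a1 ?u e) - F1 e - b1 ?l e"
        unfolding x1 x2 x3 x4 X_def T_def by (simp add: algebra_simps)
      have y1: "\<bar>a1 e ?U\<bar> \<le> Kb * Kb * ne"
        by (rule M3[of _ CA n]) (use ba1[OF eV UV, folded ne_def n_def] CA KbA n0 nKb ne0 in \<open>auto simp: algebra_simps\<close>)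
      have y2: "\<bar>a1 ?u e\<bar> \<le> Kb * Kb * ne"
        by (rule M3[of _ CA Ku]) (use ba1[OF uT eV, folded ne_def, unfolded Ku'] CA KbA Ku Kbu ne0 in auto)
      have y3: "\<bar>F1 e\<bar> \<le> Kb * Kb * ne"
        by (rule M3[of _ nf1 1]) (use bF1[OF eV, folded ne_def] nf1 Kbf Kb1 ne0 in auto)
      have y4: "\<bar>b1 ?l e\<bar> \<le> Kb * Kb * ne"
        by (rule M3[of _ Kl CB]) (use bb1[OF lT eV, folded ne_def, unfolded Kl'] Kl Kbl CB KbB ne0 in auto)
      show ?thesis unfolding XTe using y1[THEN abs_le_D1] y1[THEN abs_le_D2] y2[THEN abs_le_D1] y2[THEN abs_le_D2]
        y3[THEN abs_le_D1] y3[THEN abs_le_D2] y4[THEN abs_le_D1] y4[THEN abs_le_D2]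
        by (intro abs_leI; (simp only: ring_distribs)?; linarith)
    qed
    define dd where "dd = (\<lambda>x. Lm s x - lam t x)"
    have ddH: "dd \<in> Hs t" unfolding dd_def by (rule Ht.ddiff[OF LH lT])
    define Md where "Md = Kb * ne + 7 * Kb * Kb * g s"
    have Md: "Md > 0"
    proof -
      have "Kb * ne \<ge> 0" using Kb0 ne0 by simp
      moreover have "Kb * Kb * g s > 0" using Kb1 g_pos by simp
      ultimately show ?thesis by (simp add: Md_def)
    qed
    have ndd: "nH dd \<le> c * Md"
    proof (rule IS[OF ddH Md])
      fix z assume z: "z \<in> V t"
      define nz where "nz = nV z"
      have nz0: "nz \<ge> 0" using nV0[OF z] by (simp add: nz_def)
      have M4z: "\<bar>x\<bar> \<le> g s * Kb * Kb * nz" if "\<bar>x\<bar> \<le> a' * b' * c' * nz" "0 \<le> a'" "a' \<le> g s" "0 \<le> b'" "b' \<le> Kb"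
        "0 \<le> c'" "c' \<le> Kb" for x a' b' c'
      proof -
        have "a' * b' * c' * nz \<le> g s * Kb * Kb * nz" by (rule mono4) (use that nz0 in auto)
        then show ?thesis using that(1) by simp
      qed
      have d1: "b0 dd z = b0 ?L z - b0 ?l z" unfolding dd_def by (rule b0_dL[OF LH lT z])
      have d2: "a0 e z = a0 ?U z - a0 ?u z" unfolding e_def by (rule a0_dL[OF UV uT z])
      have d3: "a0 z e = a0 z ?U - a0 z ?u" unfolding e_def by (rule a0_dR[OF UV uT z])
      have Q1: "\<bar>a0 e z\<bar> \<le> Kb * ne * nz"
        using order_trans[OF ba0[OF eV z, folded ne_def nz_def] mono3[OF cAhi0 Kbh ne0 order_refl nz0 order_refl]] .
      have Q2: "\<bar>a0 z e\<bar> \<le> Kb * ne * nz"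
        using order_trans[OF ba0[OF z eV, folded ne_def nz_def] mono3[OF cAhi0 Kbh nz0 order_refl ne0 order_refl]] by (simp add: algebra_simps)
      have Q3: "\<bar>s * a1 ?U z\<bar> \<le> g s * Kb * Kb * nz"
        by (rule M4z[of _ "\<bar>s\<bar>" CA n]) (use abs_mult_le[OF ba1[OF UV z, folded n_def nz_def]] gs_ge CA KbA n0 nKb in \<open>auto simp: mult.assoc\<close>)
      have Q4: "\<bar>s * a1 z ?U\<bar> \<le> g s * Kb * Kb * nz"
        by (rule M4z[of _ "\<bar>s\<bar>" CA n]) (use abs_mult_le[OF ba1[OF z UV, folded n_def nz_def]] gs_ge CA KbA n0 nKb in \<open>auto simp: algebra_simps\<close>)
      have Q5: "\<bar>a2 s ?U z\<bar> \<le> g s * Kb * Kb * nz"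
        by (rule M4z[of _ "oA s" 1 n]) (use ba2[OF s UV z, folded n_def nz_def] gs_ge oA0 Kb1 n0 nKb in auto)
      have Q6: "\<bar>a2 s z ?U\<bar> \<le> g s * Kb * Kb * nz"
        by (rule M4z[of _ "oA s" 1 n]) (use ba2[OF s z UV, folded n_def nz_def] gs_ge oA0 Kb1 n0 nKb in \<open>auto simp: algebra_simps\<close>)
      have Q7: "\<bar>s * F1 z\<bar> \<le> g s * Kb * Kb * nz"
        by (rule M4z[of _ "\<bar>s\<bar>" nf1 1]) (use abs_mult_le[OF bF1[OF z, folded nz_def]] gs_ge nf1 Kbf Kb1 in \<open>auto simp: mult.assoc\<close>)
      have Q8: "\<bar>F2 s z\<bar> \<le> g s * Kb * Kb * nz"
        by (rule M4z[of _ "oF s" 1 1]) (use bF2[OF s z, folded nz_def] gs_ge oF0 Kb1 in auto)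
      have Q9: "\<bar>s * b1 ?L z\<bar> \<le> g s * Kb * Kb * nz"
        by (rule M4z[of _ "\<bar>s\<bar>" nl CB]) (use abs_mult_le[OF bb1[OF LH z, folded nl_def nz_def]] gs_ge nl0 nlKb CB KbB in \<open>auto simp: mult.assoc\<close>)
      have Q10: "\<bar>b2 s ?L z\<bar> \<le> g s * Kb * Kb * nz"
        by (rule M4z[of _ "oB s" nl 1]) (use bb2[OF s LH z, folded nl_def nz_def] gs_ge oB0 nl0 nlKb Kb1 in \<open>auto simp: algebra_simps\<close>)
      have Mexp: "Md * nz = Kb * ne * nz + 7 * (g s * Kb * Kb * nz)" by (simp add: Md_def algebra_simps)
      have P: "g s * Kb * Kb * nz \<ge> 0" using g_pos Kb0 nz0 by simp
      have "\<bar>b0 dd z\<bar> \<le> Md * nz"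
        unfolding Mexp d1 using T2[OF s z] E0[OF z] d2 d3 P Q1[THEN abs_le_D1] Q1[THEN abs_le_D2] Q2[THEN abs_le_D1] Q2[THEN abs_le_D2]
          Q3[THEN abs_le_D1] Q3[THEN abs_le_D2] Q4[THEN abs_le_D1] Q4[THEN abs_le_D2]
          Q5[THEN abs_le_D1] Q5[THEN abs_le_D2] Q6[THEN abs_le_D1] Q6[THEN abs_le_D2]
          Q7[THEN abs_le_D1] Q7[THEN abs_le_D2] Q8[THEN abs_le_D1] Q8[THEN abs_le_D2]
          Q9[THEN abs_le_D1] Q9[THEN abs_le_D2] Q10[THEN abs_le_D1] Q10[THEN abs_le_D2]
        by (intro abs_leI; (simp only: ring_distribs)?; linarith)
      then show "\<bar>b0 dd z\<bar> \<le> Md * nV z" by (simp add: nz_def)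
    qed
    have ndd0: "nH dd \<ge> 0" by (rule nH0[OF ddH])
    have YT: "\<bar>Y s - T\<bar> \<le> Kb * Kb * (c * Md)"
    proof -
      have "Y s - T = - b1 dd ?u" unfolding dd_def b1_dL[OF LH lT uT] Y_def T_def by simp
      moreover have "\<bar>b1 dd ?u\<bar> \<le> nH dd * Kb * Kb"
        using order_trans[OF bb1[OF ddH uT, unfolded Ku'] mono3[OF ndd0 order_refl CB KbB Ku Kbu]] .
      moreover have "nH dd * Kb * Kb \<le> (c * Md) * Kb * Kb" using ndd Kb0 by (simp add: mult_right_mono)
      ultimately show ?thesis by (simp add: algebra_simps)
    qed
    have oo: "oA s + oF s + oB s \<ge> 0" using oA0[of s] oB0[of s] oF0[of s] by simp
    have r1b: "\<bar>r1 s\<bar> \<le> Kb * Kb * (oA s + oF s + oB s)"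
    proof -
      have KK: "Kb * Kb * (oA s + oF s + oB s) = oA s * Kb * Kb + oF s * Kb * Kb + oB s * Kb * Kb" by (simp add: algebra_simps)
      have z1: "\<bar>a2 s ?u ?u\<bar> \<le> oA s * Kb * Kb"
        using order_trans[OF ba2[OF s uT uT, unfolded Ku'] mono3[OF oA0[of s] order_refl Ku Kbu Ku Kbu]] .
      have z2: "\<bar>F2 s ?u\<bar> \<le> oF s * Kb * Kb"
        using bF2[OF s uT, unfolded Ku'] mono3[OF oF0[of s] order_refl Ku Kbu zero_le_one Kb1, unfolded mult_1_right] by linarith
      have z3: "\<bar>b2 s ?L ?u\<bar> \<le> oB s * Kb * Kb"
        using order_trans[OF bb2[OF s LH uT, folded nl_def, unfolded Ku'] mono3[OF nl0 nlKb oB0[of s] order_refl Ku Kbu]] by (simp add: algebra_simps)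
      have z4: "oA s * Kb * Kb \<ge> 0" using oA0[of s] Kb0 by simp
      show ?thesis unfolding r1_def KK using z1[THEN abs_le_D1] z1[THEN abs_le_D2] z2[THEN abs_le_D1] z2[THEN abs_le_D2]
        z3[THEN abs_le_D1] z3[THEN abs_le_D2] z4
        by (intro abs_leI; (simp only: ring_distribs)?; linarith)
    qed
    have r2b: "\<bar>r2 s\<bar> \<le> Kb * Kb * (oA s + oF s + oB s)"
    proof -
      have KK: "Kb * Kb * (oA s + oF s + oB s) = oA s * Kb * Kb + oF s * Kb * Kb + oB s * Kb * Kb" by (simp add: algebra_simps)
      have z1: "\<bar>a2 s ?U ?U\<bar> \<le> oA s * Kb * Kb"
        using order_trans[OF ba2[OF s UV UV, folded n_def] mono3[OF oA0[of s] order_refl n0 nKb n0 nKb]] .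
      have z2: "\<bar>F2 s ?U\<bar> \<le> oF s * Kb * Kb"
        using bF2[OF s UV, folded n_def] mono3[OF oF0[of s] order_refl n0 nKb zero_le_one Kb1, unfolded mult_1_right] by linarith
      have z3: "\<bar>b2 s ?l ?U\<bar> \<le> oB s * Kb * Kb"
        using order_trans[OF bb2[OF s lT UV, folded n_def, unfolded Kl'] mono3[OF Kl Kbl oB0[of s] order_refl n0 nKb]] by (simp add: algebra_simps)
      have z4: "oA s * Kb * Kb \<ge> 0" using oA0[of s] Kb0 by simp
      show ?thesis unfolding r2_def KK using z1[THEN abs_le_D1] z1[THEN abs_le_D2] z2[THEN abs_le_D1] z2[THEN abs_le_D2]
        z3[THEN abs_le_D1] z3[THEN abs_le_D2] z4
        by (intro abs_leI; (simp only: ring_distribs)?; linarith)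
    qed
    have sa: "\<bar>s\<bar> > 0" using s0 by simp
    have rdiv: "\<bar>r1 s\<bar> / \<bar>s\<bar> + \<bar>r2 s\<bar> / \<bar>s\<bar> \<le> 2 * Kb * Kb * (oA s / \<bar>s\<bar> + oF s / \<bar>s\<bar> + oB s / \<bar>s\<bar>)"
    proof -
      have "\<bar>r1 s\<bar> / \<bar>s\<bar> \<le> Kb * Kb * (oA s + oF s + oB s) / \<bar>s\<bar>" by (rule divide_right_mono[OF r1b]) simp
      moreover have "\<bar>r2 s\<bar> / \<bar>s\<bar> \<le> Kb * Kb * (oA s + oF s + oB s) / \<bar>s\<bar>" by (rule divide_right_mono[OF r2b]) simp
      moreover have "Kb * Kb * (oA s + oF s + oB s) / \<bar>s\<bar> = Kb * Kb * (oA s / \<bar>s\<bar> + oF s / \<bar>s\<bar> + oB s / \<bar>s\<bar>)"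
        using sa by (simp add: field_simps)
      ultimately show ?thesis by simp
    qed
    have lower: "s * X s + r2 s \<le> D s"
      using T3[OF s] S0[OF UV] T1[OF s lT] unfolding D_def X_def r2_def by ((simp only: ring_distribs)?; linarith)
    have upper: "D s \<le> s * Y s + r1 s"
      using T4[OF s uT] En0 C0[OF LH] unfolding D_def Y_def r1_def by ((simp only: ring_distribs)?; linarith)
    have Phi: "\<bar>X s - T\<bar> + \<bar>Y s - T\<bar> + \<bar>r1 s\<bar> / \<bar>s\<bar> + \<bar>r2 s\<bar> / \<bar>s\<bar> \<le> \<Phi> s"
    proof -
      have "3 * Kb * Kb * ne \<le> 3 * Kb * Kb * sqrt (Kq * g s)" using ne_sq Kb0 by (simp add: mult_left_mono)
      moreover have "Kb * Kb * (c * Md) \<le> Kb * Kb * (c * (Kb * sqrt (Kq * g s) + 7 * Kb * Kb * g s))"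
      proof -
        have "Kb * ne \<le> Kb * sqrt (Kq * g s)" using ne_sq Kb0 by (simp add: mult_left_mono)
        then have "Md \<le> Kb * sqrt (Kq * g s) + 7 * Kb * Kb * g s" by (simp add: Md_def)
        then have "c * Md \<le> c * (Kb * sqrt (Kq * g s) + 7 * Kb * Kb * g s)" using c by (simp add: mult_left_mono)
        then show ?thesis using Kb0 by (simp add: mult_left_mono)
      qed
      ultimately show ?thesis using XT YT rdiv unfolding \<Phi>_def by linarith
    qed
    show ?thesis using lower upper Phi by simp
  qed
  have tA: "(oA \<longlongrightarrow> 0) (at 0)" by (rule small_o_tendsto[OF A2_small(1)])
  have tB: "(oB \<longlongrightarrow> 0) (at 0)" by (rule small_o_tendsto[OF B2_small(1)])
  have tF: "(oF \<longlongrightarrow> 0) (at 0)" by (rule small_o_tendsto[OF f2_small(1)])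
  define r where "r = min (t - t0) (t1 - t)"
  have r: "r > 0" using t_in by (simp add: r_def)
  have ev1: "eventually (\<lambda>s. \<bar>s\<bar> < r) (at 0)" by (rule order_tendstoD(2)[OF abs_tendsto0 r])
  have ev2: "eventually (\<lambda>s::real. \<bar>s\<bar> < 1) (at 0)" by (rule order_tendstoD(2)[OF abs_tendsto0 zero_less_one])
  have "((\<lambda>s. \<bar>s\<bar> * CA) \<longlongrightarrow> 0 * CA) (at 0)" by (intro tendsto_mult abs_tendsto0 tendsto_const)
  then have ev3: "eventually (\<lambda>s. \<bar>s\<bar> * CA < cAlo / 4) (at 0)" using cA by (intro order_tendstoD(2)) auto
  have "((\<lambda>s. c * (\<bar>s\<bar> * CB)) \<longlongrightarrow> c * (0 * CB)) (at 0)" by (intro tendsto_mult abs_tendsto0 tendsto_const)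
  then have ev4: "eventually (\<lambda>s. c * (\<bar>s\<bar> * CB) < 1/4) (at 0)" by (intro order_tendstoD(2)) auto
  have ev5: "eventually (\<lambda>s. oA s < cAlo / 4) (at 0)" using cA by (intro order_tendstoD(2)[OF tA]) auto
  have ev6: "eventually (\<lambda>s. oA s < 1) (at 0)" by (intro order_tendstoD(2)[OF tA]) auto
  have ev7: "eventually (\<lambda>s. oF s < 1) (at 0)" by (intro order_tendstoD(2)[OF tF]) auto
  have ev8: "eventually (\<lambda>s. oB s < 1) (at 0)" by (intro order_tendstoD(2)[OF tB]) auto
  have "((\<lambda>s. c * oB s) \<longlongrightarrow> c * 0) (at 0)" by (intro tendsto_mult tB tendsto_const)
  then have ev9: "eventually (\<lambda>s. c * oB s < 1/4) (at 0)" by (intro order_tendstoD(2)) auto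
  have evg: "eventually good (at 0)"
    using ev1 ev2 ev3 ev4 ev5 ev6 ev7 ev8 ev9 ev_neq0
  proof eventually_elim
    case (elim s)
    then have "s \<in> I" unfolding I_def r_def by auto
    then show "good s" using elim unfolding good_def by auto
  qed
  have ev: "eventually (\<lambda>s. s * X s + r2 s \<le> D s \<and> D s \<le> s * Y s + r1 s
      \<and> \<bar>X s - T\<bar> + \<bar>Y s - T\<bar> + \<bar>r1 s\<bar> / \<bar>s\<bar> + \<bar>r2 s\<bar> / \<bar>s\<bar> \<le> \<Phi> s) (at 0)"
    using evg by eventually_elim (rule main)
  have tg: "(g \<longlongrightarrow> 0) (at 0)"
  proof -
    have "(g \<longlongrightarrow> 0 + 0 + 0 + 0) (at 0)" unfolding g_def by (intro tendsto_add abs_tendsto0 tA tF tB)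
    then show ?thesis by simp
  qed
  have tsq: "((\<lambda>s. sqrt (Kq * g s)) \<longlongrightarrow> 0) (at 0)"
  proof -
    have "((\<lambda>s. sqrt (Kq * g s)) \<longlongrightarrow> sqrt (Kq * 0)) (at 0)" by (intro tendsto_real_sqrt tendsto_mult tendsto_const tg)
    then show ?thesis by simp
  qed
  have tPhi: "(\<Phi> \<longlongrightarrow> 0) (at 0)"
  proof -
    have "(\<Phi> \<longlongrightarrow> 3 * Kb * Kb * 0 + Kb * Kb * (c * (Kb * 0 + 7 * Kb * Kb * 0)) + 2 * Kb * Kb * (0 + 0 + 0)) (at 0)"
      unfolding \<Phi>_def
      by (intro tendsto_add tendsto_mult tendsto_const tsq tg small_o_div_abs[OF A2_small(1)]
          small_o_div_abs[OF f2_small(1)] small_o_div_abs[OF B2_small(1)])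
    then show ?thesis by simp
  qed
  have lim: "((\<lambda>s. D s / s) \<longlongrightarrow> T) (at 0)" by (rule squeeze_lim[OF ev tPhi])
  have Tg: "pV t (\<lambda>x. (1/2) * A1 (u t) x - f1 x) (u t) - pH t (lam t) (B1 (u t)) = T"
  proof -
    have "pV t (\<lambda>x. (1/2) * A1 (u t) x - f1 x) (u t) = pV t (\<lambda>x. (1/2) * A1 (u t) x) (u t) - pV t f1 (u t)"
      by (rule Vt.gdiffL[OF Vt.dscale[OF A1_in[OF uT]] f1_in uT])
    also have "pV t (\<lambda>x. (1/2) * A1 (u t) x) (u t) = 1/2 * pV t (A1 (u t)) (u t)" by (rule Vt.gscaleL[OF A1_in[OF uT] uT])
    finally show ?thesis by (simp add: T_def a1_def F1_def b1_def)
  qed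
  show ?thesis
  proof (rule conjI[OF part1])
    show "((\<lambda>s. (energy (pV (t + s)) (A (t + s)) f (u (t + s)) - energy (pV t) (A t) f (u t)) / s)
            \<longlongrightarrow> pV t (\<lambda>x. (1/2) * A1 (u t) x - f1 x) (u t) - pH t (lam t) (B1 (u t))) (at 0)"
      unfolding Tg using lim unfolding D_def .
  qed
qed

end
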